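(* Let $\tau>0$ and consider the system \[ \begin{cases} x'(t)=s-dx(t)-kx(t)v(t),\\ y'(t)=k\mathrm{e}^{-\delta\tau}x(t-\tau)v(t-\tau)-\delta y(t)-py(t)z(t),\\ v'(t)=N\delta y(t)-\mu v(t),\\ z'(t)=qy(t)z(t)-bz(t), \end{cases} \] with initial conditions $x(\theta)=\varphi_{1}(\theta)$, $v(\theta)=\varphi_{3}(\theta)$ for $\theta\in[-\tau,0]$, $y(0)=y_{0}\ge 0$, $z(0)=z_{0}\ge0$, where $\varphi_{1},\varphi_3\in C([-\tau,0],\mathbb{R}_{+})$. Let \[ \overline{R}_{0}=\frac{s}{d\frac{\mu}{k\mathrm{e}^{-\delta\tau}N}},\qquad \overline{R}_{1}=\frac{s}{d\frac{\mu}{k\mathrm{e}^{-\delta\tau}N}+\mathrm{e}^{\delta\tau}\delta\frac{b}{q}}, \] let $E_0=(s/d,0,0,0)$, let $\overline{E}_1=\left(\frac{\mu\mathrm{e}^{\delta\tau}}{kN},\ \frac{\mathrm{e}^{-\delta\tau}}{\delta}\big(s-\frac{d\mu\mathrm{e}^{\delta\tau}}{kN}\big),\ \frac{N\mathrm{e}^{-\delta\tau}}{\mu}\big(s-\frac{d\mu\mathrm{e}^{\delta\tau}}{kN}\big),\ 0\right)$ (the equilibrium with positive $x,y,v$ and $z=0$, existing when $\overline R_0>1$), and let $\overline{E}_2=\left(\bar x_2,\ \frac{b}{q},\ \frac{N\delta b}{\mu q},\ \frac{\delta}{p}\big(\frac{k\mathrm{e}^{-\delta\tau}N\bar x_2}{\mu}-1\big)\right)$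 with $\bar x_2=\frac{s}{d+kN\delta b/(\mu q)}$ (the equilibrium with all components positive, existing when $\overline R_1>1$). Then: (i) If $\overline{R}_{0}\leq1$, then $E_{0}$ is globally asymptotically stable. (ii) If $\overline{R}_{1}\leq1<\overline{R}_{0}$, then $\overline{E}_{1}$ is globally asymptotically stable with respect to solutions whose initial data satisfy $y_{0}+\varphi_{1}(-\tau)\varphi_{3}(-\tau)>0$ or $\varphi_{3}(0)>0$. (iii) If $\overline{R}_{1}>1$, then $\overline{E}_{2}$ is globally asymptotically stable with respect to solutions whose initial data satisfy $z_{0}>0$ and either $y_{0}+\varphi_{1}(-\tau)\varphi_{3}(-\tau)>0$ or $\varphi_{3}(0)>0$.
   Context: All parameters $s,d,k,\delta,p,N,\mu,q,b$ are positive constants. Globally asymptotically stable means: the equilibrium is (Lyapunov) stable and every solution with admissible initial data converges to it as $t\to\infty$. *)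

theory Defs
  imports "HOL-Analysis.Analysis"
begin

text \<open>Solutions of the delayed virus model on [-tau, infinity).
  x and v are given on [-tau,0] by the (continuous) initial functions phi1, phi3;
  y and z only need their values for t >= 0 (y(0)=y0, z(0)=z0).
  The ODEs hold for t >= 0, with a right derivative at t = 0.\<close>
definition is_solution ::
  "real \<Rightarrow> real \<Rightarrow> real \<Rightarrow> real \<Rightarrow> real \<Rightarrow> real \<Rightarrow> real \<Rightarrow> real \<Rightarrow> real \<Rightarrow> real \<Rightarrow>
   (real \<Rightarrow> real) \<Rightarrow> (real \<Rightarrow> real) \<Rightarrow> (real \<Rightarrow> real) \<Rightarrow> (real \<Rightarrow> real) \<Rightarrow> bool" where
  "is_solution s d k dl p N mu q b tau x y v z \<longleftrightarrow>
     continuous_on {-tau..} x \<and> continuous_on {-tau..} v \<and>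
     continuous_on {0..} y \<and> continuous_on {0..} z \<and>
     (\<forall>t\<ge>0.
        (x has_real_derivative (s - d * x t - k * x t * v t)) (at t within {0..}) \<and>
        (y has_real_derivative
            (k * exp (- dl * tau) * x (t - tau) * v (t - tau) - dl * y t - p * y t * z t))
            (at t within {0..}) \<and>
        (v has_real_derivative (N * dl * y t - mu * v t)) (at t within {0..}) \<and>
        (z has_real_derivative (q * y t * z t - b * z t)) (at t within {0..}))"

definition admissible ::
  "real \<Rightarrow> (real \<Rightarrow> real) \<Rightarrow> (real \<Rightarrow> real) \<Rightarrow> (real \<Rightarrow> real) \<Rightarrow> (real \<Rightarrow> real) \<Rightarrow> bool" where
  "admissible tau x y v z \<longleftrightarrow>
     (\<forall>\<theta>\<in>{-tau..0}. x \<theta> \<ge> 0 \<and> v \<theta> \<ge> 0) \<and> y 0 \<ge> 0 \<and> z 0 \<ge> 0"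

definition GAS ::
  "real \<Rightarrow> real \<Rightarrow> real \<Rightarrow> real \<Rightarrow> real \<Rightarrow> real \<Rightarrow> real \<Rightarrow> real \<Rightarrow> real \<Rightarrow> real \<Rightarrow>
   ((real \<Rightarrow> real) \<Rightarrow> (real \<Rightarrow> real) \<Rightarrow> (real \<Rightarrow> real) \<Rightarrow> (real \<Rightarrow> real) \<Rightarrow> bool) \<Rightarrow>
   real \<Rightarrow> real \<Rightarrow> real \<Rightarrow> real \<Rightarrow> bool" where
  "GAS s d k dl p N mu q b tau P ex ey ev ez \<longleftrightarrow>
     (\<forall>\<epsilon>>0. \<exists>\<eta>>0. \<forall>x y v z.
        is_solution s d k dl p N mu q b tau x y v z \<and> P x y v z \<and>
        (\<forall>\<theta>\<in>{-tau..0}. \<bar>x \<theta> - ex\<bar> < \<eta> \<and> \<bar>v \<theta> - ev\<bar> < \<eta>) \<and>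
        \<bar>y 0 - ey\<bar> < \<eta> \<and> \<bar>z 0 - ez\<bar> < \<eta> \<longrightarrow>
        (\<forall>t\<ge>0. \<bar>x t - ex\<bar> < \<epsilon> \<and> \<bar>y t - ey\<bar> < \<epsilon> \<and> \<bar>v t - ev\<bar> < \<epsilon> \<and> \<bar>z t - ez\<bar> < \<epsilon>)) \<and>
     (\<forall>x y v z. is_solution s d k dl p N mu q b tau x y v z \<and> P x y v z \<longrightarrow>
        (x \<longlongrightarrow> ex) at_top \<and> (y \<longlongrightarrow> ey) at_top \<and>
        (v \<longlongrightarrow> ev) at_top \<and> (z \<longlongrightarrow> ez) at_top)"

definition R0bar :: "real \<Rightarrow> real \<Rightarrow> real \<Rightarrow> real \<Rightarrow> real \<Rightarrow> real \<Rightarrow> real \<Rightarrow> real" where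
  "R0bar s d k dl N mu tau = s / (d * (mu / (k * exp (- dl * tau) * N)))"

definition R1bar :: "real \<Rightarrow> real \<Rightarrow> real \<Rightarrow> real \<Rightarrow> real \<Rightarrow> real \<Rightarrow> real \<Rightarrow> real \<Rightarrow> real \<Rightarrow> real" where
  "R1bar s d k dl N mu q b tau =
     s / (d * (mu / (k * exp (- dl * tau) * N)) + exp (dl * tau) * dl * (b / q))"

end

theory Submission
  imports Defs
begin

lemma mvt_real:
  fixes f :: "real \<Rightarrow> real"
  assumes "a \<le> b" "\<And>t. t \<in> {a..b} \<Longrightarrow> (f has_real_derivative f' t) (at t within {a..b})"
  shows "\<exists>\<xi>\<in>{a..b}. f b - f a = f' \<xi> * (b - a)"
proof -
  have "\<exists>\<xi>\<in>{a..b}. f b - f a = (\<lambda>h. f' \<xi> * h) (b - a)"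
    by (rule mvt_very_simple[OF assms(1)])
       (use assms(2) in \<open>auto simp: has_field_derivative_def\<close>)
  then show ?thesis by auto
qed

lemma deriv_nonpos_mono:
  fixes f :: "real \<Rightarrow> real"
  assumes "a \<le> b" "\<And>t. t \<in> {a..b} \<Longrightarrow> (f has_real_derivative f' t) (at t within {a..b})"
    "\<And>t. t \<in> {a..b} \<Longrightarrow> f' t \<le> 0"
  shows "f b \<le> f a"
proof -
  obtain \<xi> where "\<xi> \<in> {a..b}" "f b - f a = f' \<xi> * (b - a)" using mvt_real[OF assms(1,2)] by blast
  moreover have "f' \<xi> * (b - a) \<le> 0" using assms(1) assms(3)[OF \<open>\<xi> \<in> _\<close>] by (simp add: mult_nonpos_nonneg)
  ultimately show ?thesis by simp
qed

lemma deriv_nonneg_mono: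
  fixes f :: "real \<Rightarrow> real"
  assumes "a \<le> b" "\<And>t. t \<in> {a..b} \<Longrightarrow> (f has_real_derivative f' t) (at t within {a..b})"
    "\<And>t. t \<in> {a..b} \<Longrightarrow> f' t \<ge> 0"
  shows "f a \<le> f b"
proof -
  obtain \<xi> where "\<xi> \<in> {a..b}" "f b - f a = f' \<xi> * (b - a)" using mvt_real[OF assms(1,2)] by blast
  moreover have "f' \<xi> * (b - a) \<ge> 0" using assms(1) assms(3)[OF \<open>\<xi> \<in> _\<close>] by simp
  ultimately show ?thesis by simp
qed

lemma deriv_pos_strict:
  fixes f :: "real \<Rightarrow> real"
  assumes "a < b" "\<And>t. t \<in> {a..b} \<Longrightarrow> (f has_real_derivative f' t) (at t within {a..b})"
    "\<And>t. t \<in> {a..b} \<Longrightarrow> f' t > 0"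
  shows "f a < f b"
proof -
  obtain \<xi> where "\<xi> \<in> {a..b}" "f b - f a = f' \<xi> * (b - a)" using mvt_real[OF less_imp_le[OF assms(1)] assms(2)] by blast
  moreover have "f' \<xi> * (b - a) > 0" using assms(1) assms(3)[OF \<open>\<xi> \<in> _\<close>] by simp
  ultimately show ?thesis by simp
qed

lemma intfactor_W:
  fixes u a g :: "real \<Rightarrow> real"
  assumes "lo \<le> hi"
    and du: "\<And>t. t \<in> {lo..hi} \<Longrightarrow> (u has_real_derivative (g t - a t * u t)) (at t within {lo..hi})"
    and ca: "continuous_on {lo..hi} a"
  defines "W \<equiv> \<lambda>t. u t * exp (integral {lo..t} a)"
  shows "\<And>t. t \<in> {lo..hi} \<Longrightarrow> (W has_real_derivative (g t * exp (integral {lo..t} a))) (at t within {lo..hi})"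
proof -
  fix t assume t: "t \<in> {lo..hi}"
  have dA: "((\<lambda>t. integral {lo..t} a) has_real_derivative a t) (at t within {lo..hi})"
    by (rule integral_has_real_derivative[OF ca t])
  have e: "((\<lambda>t. exp (integral {lo..t} a)) has_real_derivative exp (integral {lo..t} a) * a t) (at t within {lo..hi})"
    by (rule DERIV_chain2[OF DERIV_exp dA])
  show "(W has_real_derivative (g t * exp (integral {lo..t} a))) (at t within {lo..hi})"
    unfolding W_def
    by (rule DERIV_cong[OF DERIV_mult[OF du[OF t] e]]) (simp add: algebra_simps)
qed

lemma intfactor:
  fixes u a g :: "real \<Rightarrow> real"
  assumes "lo \<le> hi"
    and du: "\<And>t. t \<in> {lo..hi} \<Longrightarrow> (u has_real_derivative (g t - a t * u t)) (at t within {lo..hi})"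
    and ca: "continuous_on {lo..hi} a"
    and g: "\<And>t. t \<in> {lo..hi} \<Longrightarrow> g t \<ge> 0"
  shows intfactor_nonneg: "u lo \<ge> 0 \<Longrightarrow> u hi \<ge> 0"
    and intfactor_pos: "u lo > 0 \<Longrightarrow> u hi > 0"
    and intfactor_strict: "u lo \<ge> 0 \<Longrightarrow> lo < hi \<Longrightarrow> (\<And>t. t \<in> {lo<..hi} \<Longrightarrow> g t > 0) \<Longrightarrow> u hi > 0"
proof -
  define W where "W \<equiv> \<lambda>t. u t * exp (integral {lo..t} a)"
  have dW: "\<And>t. t \<in> {lo..hi} \<Longrightarrow> (W has_real_derivative (g t * exp (integral {lo..t} a))) (at t within {lo..hi})"
    unfolding W_def by (rule intfactor_W[OF assms(1) du ca])
  have W0: "W lo = u lo" unfolding W_def by simp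
  have mono: "W r \<le> W r'" if "lo \<le> r" "r \<le> r'" "r' \<le> hi" for r r'
  proof (rule deriv_nonneg_mono[OF \<open>r \<le> r'\<close>])
    fix t assume "t \<in> {r..r'}"
    then have t: "t \<in> {lo..hi}" using that by auto
    show "(W has_real_derivative (g t * exp (integral {lo..t} a))) (at t within {r..r'})"
      by (rule has_field_derivative_subset[OF dW[OF t]]) (use that in auto)
    show "g t * exp (integral {lo..t} a) \<ge> 0" using g[OF t] by simp
  qed
  have sgn: "u hi > 0 \<longleftrightarrow> W hi > 0" "u hi \<ge> 0 \<longleftrightarrow> W hi \<ge> 0"
    unfolding W_def by (simp_all add: zero_less_mult_iff zero_le_mult_iff)
  show "u lo \<ge> 0 \<Longrightarrow> u hi \<ge> 0" using mono[of lo hi] assms(1) W0 sgn by auto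
  show "u lo > 0 \<Longrightarrow> u hi > 0" using mono[of lo hi] assms(1) W0 sgn by auto
  assume h: "u lo \<ge> 0" "lo < hi" "\<And>t. t \<in> {lo<..hi} \<Longrightarrow> g t > 0"
  define m where "m = (lo + hi) / 2"
  have m: "lo < m" "m < hi" using h(2) by (auto simp: m_def)
  have "W m < W hi"
  proof (rule deriv_pos_strict[OF m(2)])
    fix t assume "t \<in> {m..hi}"
    then have t: "t \<in> {lo..hi}" "t \<in> {lo<..hi}" using m h(2) by auto
    show "(W has_real_derivative (g t * exp (integral {lo..t} a))) (at t within {m..hi})"
      by (rule has_field_derivative_subset[OF dW[OF t(1)]]) (use m in auto)
    show "g t * exp (integral {lo..t} a) > 0" using h(3)[OF t(2)] by simp
  qed
  moreover have "W lo \<le> W m" using mono[of lo m] m by auto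
  ultimately show "u hi > 0" using W0 h(1) sgn by auto
qed

definition hh :: "real \<Rightarrow> real \<Rightarrow> real" where
  "hh us u = u - us * ln u - (us - us * ln us)"

lemma hh_zero[simp]: "hh 0 u = u" by (simp add: hh_def)

lemma hh_w: assumes "us > 0" "u > 0"
  shows "hh us u = us * (u/us - 1 - ln (u/us))"
  using assms by (simp add: hh_def ln_div algebra_simps)

lemma G_sqrt: assumes "w > 0" shows "w - 1 - ln w \<ge> (sqrt w - 1)^2"
proof -
  have "ln w = 2 * ln (sqrt w)" using assms by (simp add: ln_sqrt)
  also have "\<dots> \<le> 2 * (sqrt w - 1)" using ln_le_minus_one[of "sqrt w"] assms by simp
  finally have "ln w \<le> 2 * (sqrt w - 1)" .
  moreover have "(sqrt w - 1)^2 = w - 2 * sqrt w + 1" using assms by (simp add: power2_eq_square algebra_simps)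
  ultimately show ?thesis by simp
qed

lemma hh_sqrt: assumes "us > 0" "u > 0"
  shows "hh us u \<ge> us * (sqrt (u/us) - 1)^2"
  using G_sqrt[of "u/us"] assms by (simp add: hh_w)

lemma hh_nonneg: assumes "us > 0" "u > 0" shows "hh us u \<ge> 0"
  using hh_sqrt[OF assms] assms by (smt (verit) mult_nonneg_nonneg zero_le_power2)

lemma hh_nonneg': assumes "us \<ge> 0" "u \<ge> 0" "us > 0 \<Longrightarrow> u > 0" shows "hh us u \<ge> 0"
  using assms hh_nonneg by (cases "us = 0") auto

lemma hh_le_sq: assumes "us > 0" "u > 0" shows "hh us u \<le> (u - us)^2 / u"
proof -
  have "ln (us/u) \<le> us/u - 1" using ln_le_minus_one[of "us/u"] assms by simp
  then have "us * ln (us/u) \<le> us * (us/u - 1)" using assms by (simp add: mult_left_mono)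
  moreover have "hh us u = u - us + us * ln (us/u)" using assms by (simp add: hh_def ln_div algebra_simps)
  moreover have "(u - us)^2 / u = u - us + us * (us/u - 1)" using assms
    by (simp add: power2_eq_square field_simps)
  ultimately show ?thesis by simp
qed

lemma hh_upper: assumes "us > 0" "u > 0" "hh us u \<le> K"
  shows "u \<le> us * (1 + sqrt (K/us))^2"
proof -
  have "(sqrt (u/us) - 1)^2 \<le> K/us" using hh_sqrt[OF assms(1,2)] assms(1,3)
    by (simp add: field_simps)
  then have "sqrt (u/us) - 1 \<le> sqrt (K/us)"
    by (metis abs_le_D1 real_le_rsqrt real_sqrt_abs)
  then have "sqrt (u/us) \<le> 1 + sqrt (K/us)" by simp
  then have "(sqrt (u/us))^2 \<le> (1 + sqrt (K/us))^2"
    by (rule power_mono) (use assms in simp)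
  then have "u/us \<le> (1 + sqrt (K/us))^2" using assms by simp
  then show ?thesis using assms(1) by (simp add: field_simps)
qed

lemma hh_lower: assumes "us > 0" "u > 0" "hh us u \<le> K"
  shows "u \<ge> us * exp (- (K/us) - 1)"
proof -
  have "us * (u/us - 1 - ln (u/us)) \<le> K" using assms hh_w by simp
  then have "u/us - 1 - ln (u/us) \<le> K/us" using assms(1) by (simp add: field_simps)
  then have "ln (u/us) \<ge> - (K/us) - 1" using assms by (smt (verit) divide_pos_pos)
  then have "exp (- (K/us) - 1) \<le> u/us" using assms
    by (metis divide_pos_pos exp_le_cancel_iff exp_ln)
  then show ?thesis using assms(1) by (simp add: field_simps)
qed

lemma hh_close: assumes "us > 0" "u > 0" "e \<ge> 0" "hh us u \<le> us * e^2"
  shows "\<bar>u - us\<bar> \<le> us * (e * (e + 2))"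
proof -
  have "(sqrt (u/us) - 1)^2 \<le> e^2" using hh_sqrt[OF assms(1,2)] assms(1,4)
    by (smt (verit) mult_le_cancel_left_pos)
  then have a: "\<bar>sqrt (u/us) - 1\<bar> \<le> e" using assms(3) by (metis abs_of_nonneg power2_le_imp_le power2_abs abs_ge_zero)
  have "u/us - 1 = (sqrt (u/us) - 1) * (sqrt (u/us) + 1)" using assms
    by (simp add: algebra_simps)
  moreover have "sqrt (u/us) \<ge> 0" using assms by simp
  ultimately have "\<bar>u/us - 1\<bar> = \<bar>sqrt (u/us) - 1\<bar> * (sqrt (u/us) + 1)" by (simp add: abs_mult)
  also have "\<dots> \<le> e * (e + 2)"
  proof (rule mult_mono[OF a])
    show "sqrt (u/us) + 1 \<le> e + 2" using a by linarith
  qed (use assms in auto)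
  finally have "\<bar>u/us - 1\<bar> \<le> e * (e + 2)" .
  moreover have "\<bar>u - us\<bar> = us * \<bar>u/us - 1\<bar>" using assms(1)
    by (simp add: field_simps abs_mult[symmetric] )
  ultimately show ?thesis using assms(1) by (simp add: mult_left_mono)
qed

lemma hh_close_ex: assumes "us \<ge> 0" "\<epsilon> > 0"
  shows "\<exists>r>0. \<forall>u. u \<ge> 0 \<and> (us > 0 \<longrightarrow> u > 0) \<and> hh us u \<le> r \<longrightarrow> \<bar>u - us\<bar> < \<epsilon>"
proof (cases "us = 0")
  case True
  then show ?thesis using assms by (intro exI[of _ "\<epsilon>/2"]) auto
next
  case False
  then have us: "us > 0" using assms by simp
  define e where "e = min 1 (\<epsilon> / (4 * us))"
  have e: "e > 0" "e \<le> 1" "e \<le> \<epsilon> / (4*us)" using us assms by (auto simp: e_def)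
  have "us * (e * (e + 2)) \<le> us * (e * 3)"
    using e us by (intro mult_left_mono) auto
  also have "\<dots> < e * (4*us)" using e us by simp
  also have "\<dots> \<le> \<epsilon>" using e(3) us by (simp add: field_simps)
  finally have lt: "us * (e * (e + 2)) < \<epsilon>" .
  show ?thesis
    by (rule exI[of _ "us * e^2"]) (use us e lt hh_close[OF us _ less_imp_le[OF e(1)]] in fastforce)
qed

definition lip :: "real \<Rightarrow> (real \<Rightarrow> real) \<Rightarrow> bool" where
  "lip T f \<longleftrightarrow> (\<exists>L. \<forall>t\<ge>T. \<forall>t'\<ge>T. \<bar>f t - f t'\<bar> \<le> L * \<bar>t - t'\<bar>)"

definition bnd :: "real \<Rightarrow> (real \<Rightarrow> real) \<Rightarrow> bool" where
  "bnd T f \<longleftrightarrow> (\<exists>M. \<forall>t\<ge>T. \<bar>f t\<bar> \<le> M)"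

lemma lipE: assumes "lip T f" obtains L where "L > 0" "\<And>t t'. t \<ge> T \<Longrightarrow> t' \<ge> T \<Longrightarrow> \<bar>f t - f t'\<bar> \<le> L * \<bar>t - t'\<bar>"
proof -
  obtain L where L: "\<forall>t\<ge>T. \<forall>t'\<ge>T. \<bar>f t - f t'\<bar> \<le> L * \<bar>t - t'\<bar>" using assms lip_def by blast
  show ?thesis
  proof (rule that[of "max L 1"])
    fix t t' assume "t \<ge> T" "t' \<ge> T"
    then have "\<bar>f t - f t'\<bar> \<le> L * \<bar>t - t'\<bar>" using L by blast
    also have "\<dots> \<le> max L 1 * \<bar>t - t'\<bar>" by (intro mult_right_mono) auto
    finally show "\<bar>f t - f t'\<bar> \<le> max L 1 * \<bar>t - t'\<bar>" .
  qed auto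
qed

lemma bndE: assumes "bnd T f" obtains M where "M > 0" "\<And>t. t \<ge> T \<Longrightarrow> \<bar>f t\<bar> \<le> M"
proof -
  obtain M where M: "\<forall>t\<ge>T. \<bar>f t\<bar> \<le> M" using assms bnd_def by blast
  show ?thesis
  proof (rule that[of "max M 1"])
    fix t assume "t \<ge> T" then show "\<bar>f t\<bar> \<le> max M 1" using M by force
  qed simp
qed

lemma lip_mono: assumes "lip T f" "T \<le> T'" shows "lip T' f"
proof -
  obtain L where "\<forall>t\<ge>T. \<forall>t'\<ge>T. \<bar>f t - f t'\<bar> \<le> L * \<bar>t - t'\<bar>" using assms(1) lip_def by blast
  then have "\<forall>t\<ge>T'. \<forall>t'\<ge>T'. \<bar>f t - f t'\<bar> \<le> L * \<bar>t - t'\<bar>" using assms(2) by auto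
  then show ?thesis unfolding lip_def by blast
qed

lemma bnd_mono: assumes "bnd T f" "T \<le> T'" shows "bnd T' f"
proof -
  obtain M where "\<forall>t\<ge>T. \<bar>f t\<bar> \<le> M" using assms(1) bnd_def by blast
  then have "\<forall>t\<ge>T'. \<bar>f t\<bar> \<le> M" using assms(2) by auto
  then show ?thesis unfolding bnd_def by blast
qed

lemma lip_const[simp]: "lip T (\<lambda>t. c)"
  unfolding lip_def by (rule exI[of _ 0]) auto

lemma bnd_const[simp]: "bnd T (\<lambda>t. c)"
  unfolding bnd_def by auto

lemma lip_add: assumes "lip T f" "lip T g" shows "lip T (\<lambda>t. f t + g t)"
proof -
  obtain L1 where "L1 > 0" and L1: "\<And>t t'. t \<ge> T \<Longrightarrow> t' \<ge> T \<Longrightarrow> \<bar>f t - f t'\<bar> \<le> L1 * \<bar>t - t'\<bar>" by (rule lipE[OF assms(1)]) blast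
  obtain L2 where "L2 > 0" and L2: "\<And>t t'. t \<ge> T \<Longrightarrow> t' \<ge> T \<Longrightarrow> \<bar>g t - g t'\<bar> \<le> L2 * \<bar>t - t'\<bar>" by (rule lipE[OF assms(2)]) blast
  show ?thesis unfolding lip_def
  proof (intro exI[of _ "L1 + L2"] allI impI)
    fix t t' assume "t \<ge> T" "t' \<ge> T"
    have "\<bar>f t + g t - (f t' + g t')\<bar> = \<bar>(f t - f t') + (g t - g t')\<bar>" by (simp add: algebra_simps)
    also have "\<dots> \<le> \<bar>f t - f t'\<bar> + \<bar>g t - g t'\<bar>" by (rule abs_triangle_ineq)
    also have "\<dots> \<le> L1 * \<bar>t - t'\<bar> + L2 * \<bar>t - t'\<bar>" using L1[OF \<open>t \<ge> T\<close> \<open>t' \<ge> T\<close>] L2[OF \<open>t \<ge> T\<close> \<open>t' \<ge> T\<close>] by (rule add_mono)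
    finally show "\<bar>f t + g t - (f t' + g t')\<bar> \<le> (L1 + L2) * \<bar>t - t'\<bar>" by (simp add: distrib_right)
  qed
qed

lemma lip_cmult: assumes "lip T f" shows "lip T (\<lambda>t. c * f t)"
proof -
  obtain L where "L > 0" and L: "\<And>t t'. t \<ge> T \<Longrightarrow> t' \<ge> T \<Longrightarrow> \<bar>f t - f t'\<bar> \<le> L * \<bar>t - t'\<bar>" by (rule lipE[OF assms(1)]) blast
  show ?thesis unfolding lip_def
  proof (intro exI[of _ "\<bar>c\<bar> * L"] allI impI)
    fix t t' assume "t \<ge> T" "t' \<ge> T"
    have "c * f t - c * f t' = c * (f t - f t')" by (simp add: right_diff_distrib)
    then have "\<bar>c * f t - c * f t'\<bar> = \<bar>c\<bar> * \<bar>f t - f t'\<bar>" by (simp only: abs_mult)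
    also have "\<dots> \<le> \<bar>c\<bar> * (L * \<bar>t - t'\<bar>)" using L[OF \<open>t \<ge> T\<close> \<open>t' \<ge> T\<close>] by (simp add: mult_left_mono)
    finally show "\<bar>c * f t - c * f t'\<bar> \<le> \<bar>c\<bar> * L * \<bar>t - t'\<bar>" by simp
  qed
qed

lemma lip_neg: "lip T f \<Longrightarrow> lip T (\<lambda>t. - f t)"
  using lip_cmult[of T f "-1"] by simp

lemma lip_diff: "lip T f \<Longrightarrow> lip T g \<Longrightarrow> lip T (\<lambda>t. f t - g t)"
  using lip_add[of T f "\<lambda>t. - g t"] lip_neg[of T g] by simp

lemma lip_mult: assumes "lip T f" "lip T g" "bnd T f" "bnd T g" shows "lip T (\<lambda>t. f t * g t)"
proof -
  obtain L1 where "L1 > 0" and L1: "\<And>t t'. t \<ge> T \<Longrightarrow> t' \<ge> T \<Longrightarrow> \<bar>f t - f t'\<bar> \<le> L1 * \<bar>t - t'\<bar>" by (rule lipE[OF assms(1)]) blast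
  obtain L2 where "L2 > 0" and L2: "\<And>t t'. t \<ge> T \<Longrightarrow> t' \<ge> T \<Longrightarrow> \<bar>g t - g t'\<bar> \<le> L2 * \<bar>t - t'\<bar>" by (rule lipE[OF assms(2)]) blast
  obtain M1 where M1: "M1 > 0" "\<And>t. t \<ge> T \<Longrightarrow> \<bar>f t\<bar> \<le> M1" using bndE[OF assms(3)] by blast
  obtain M2 where M2: "M2 > 0" "\<And>t. t \<ge> T \<Longrightarrow> \<bar>g t\<bar> \<le> M2" using bndE[OF assms(4)] by blast
  show ?thesis unfolding lip_def
  proof (intro exI[of _ "M1 * L2 + M2 * L1"] allI impI)
    fix t t' assume t: "t \<ge> T" "t' \<ge> T"
    have "f t * g t - f t' * g t' = f t * (g t - g t') + g t' * (f t - f t')" by (simp add: algebra_simps)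
    then have "\<bar>f t * g t - f t' * g t'\<bar> \<le> \<bar>f t\<bar> * \<bar>g t - g t'\<bar> + \<bar>g t'\<bar> * \<bar>f t - f t'\<bar>"
      using abs_triangle_ineq[of "f t * (g t - g t')" "g t' * (f t - f t')"] by (simp only: abs_mult)
    also have "\<dots> \<le> M1 * (L2 * \<bar>t - t'\<bar>) + M2 * (L1 * \<bar>t - t'\<bar>)"
    proof (rule add_mono)
      show "\<bar>f t\<bar> * \<bar>g t - g t'\<bar> \<le> M1 * (L2 * \<bar>t - t'\<bar>)"
        by (rule mult_mono[OF M1(2)[OF t(1)] L2[OF t]]) (use M1 in auto)
      show "\<bar>g t'\<bar> * \<bar>f t - f t'\<bar> \<le> M2 * (L1 * \<bar>t - t'\<bar>)"
        by (rule mult_mono[OF M2(2)[OF t(2)] L1[OF t]]) (use M2 in auto)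
    qed
    finally show "\<bar>f t * g t - f t' * g t'\<bar> \<le> (M1 * L2 + M2 * L1) * \<bar>t - t'\<bar>" by (simp add: algebra_simps)
  qed
qed

lemma lip_shift: assumes "lip T f" shows "lip (T + c) (\<lambda>t. f (t - c))"
proof -
  obtain L where "L > 0" and L: "\<And>t t'. t \<ge> T \<Longrightarrow> t' \<ge> T \<Longrightarrow> \<bar>f t - f t'\<bar> \<le> L * \<bar>t - t'\<bar>" by (rule lipE[OF assms(1)]) blast
  show ?thesis unfolding lip_def
  proof (intro exI[of _ L] allI impI)
    fix t t' assume "t \<ge> T + c" "t' \<ge> T + c"
    then have "\<bar>f (t - c) - f (t' - c)\<bar> \<le> L * \<bar>(t - c) - (t' - c)\<bar>" by (intro L) auto
    then show "\<bar>f (t - c) - f (t' - c)\<bar> \<le> L * \<bar>t - t'\<bar>" by simp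
  qed
qed

lemma bnd_add: assumes "bnd T f" "bnd T g" shows "bnd T (\<lambda>t. f t + g t)"
proof -
  obtain M1 M2 where "\<And>t. t \<ge> T \<Longrightarrow> \<bar>f t\<bar> \<le> M1" "\<And>t. t \<ge> T \<Longrightarrow> \<bar>g t\<bar> \<le> M2"
    using assms unfolding bnd_def by blast
  then have "\<And>t. t \<ge> T \<Longrightarrow> \<bar>f t + g t\<bar> \<le> M1 + M2" by (smt (verit))
  then show ?thesis unfolding bnd_def by blast
qed

lemma bnd_mult: "bnd T f \<Longrightarrow> bnd T g \<Longrightarrow> bnd T (\<lambda>t. f t * g t)"
proof -
  assume "bnd T f" "bnd T g"
  then obtain M1 M2 where "M1 > 0" "\<And>t. t \<ge> T \<Longrightarrow> \<bar>f t\<bar> \<le> M1" "M2 > 0" "\<And>t. t \<ge> T \<Longrightarrow> \<bar>g t\<bar> \<le> M2"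
    using bndE by metis
  then have "\<And>t. t \<ge> T \<Longrightarrow> \<bar>f t * g t\<bar> \<le> M1 * M2"
    unfolding abs_mult by (intro mult_mono) auto
  then show ?thesis unfolding bnd_def by blast
qed

lemma bnd_cmult: "bnd T f \<Longrightarrow> bnd T (\<lambda>t. c * f t)"
  using bnd_mult[of T "\<lambda>t. c" f] by simp

lemma bnd_diff: "bnd T f \<Longrightarrow> bnd T g \<Longrightarrow> bnd T (\<lambda>t. f t - g t)"
  using bnd_add[of T f "\<lambda>t. (-1) * g t"] bnd_cmult[of T g "-1"] by simp

lemma bnd_shift: assumes "bnd T f" shows "bnd (T + c) (\<lambda>t. f (t - c))"
proof -
  obtain M where "\<And>t. t \<ge> T \<Longrightarrow> \<bar>f t\<bar> \<le> M" using assms unfolding bnd_def by blast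
  then have "\<And>t. t \<ge> T + c \<Longrightarrow> \<bar>f (t - c)\<bar> \<le> M" by simp
  then show ?thesis unfolding bnd_def by blast
qed

lemma lip_deriv:
  assumes "\<And>t. t \<ge> T \<Longrightarrow> (f has_real_derivative f' t) (at t within {T..})" "bnd T f'"
  shows "lip T f"
proof -
  obtain M where M: "M > 0" "\<And>t. t \<ge> T \<Longrightarrow> \<bar>f' t\<bar> \<le> M" using bndE[OF assms(2)] by blast
  have *: "\<bar>f t' - f t\<bar> \<le> M * \<bar>t - t'\<bar>" if "T \<le> t" "t \<le> t'" for t t'
  proof -
    have "\<exists>\<xi>\<in>{t..t'}. f t' - f t = f' \<xi> * (t' - t)"
    proof (rule mvt_real[OF \<open>t \<le> t'\<close>, of f f'])
      fix \<theta> assume th: "\<theta> \<in> {t..t'}"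
      then have "\<theta> \<ge> T" using that by auto
      show "(f has_real_derivative f' \<theta>) (at \<theta> within {t..t'})"
        by (rule has_field_derivative_subset[OF assms(1)[OF \<open>\<theta> \<ge> T\<close>]]) (use that in auto)
    qed
    then obtain \<xi> where \<xi>: "\<xi> \<in> {t..t'}" "f t' - f t = f' \<xi> * (t' - t)" by blast
    have "\<bar>f t' - f t\<bar> = \<bar>f' \<xi>\<bar> * (t' - t)" using \<xi> that by (simp add: abs_mult)
    also have "\<dots> \<le> M * (t' - t)" using M(2)[of \<xi>] \<xi> that by (intro mult_right_mono) auto
    finally show ?thesis using that by simp
  qed
  show ?thesis unfolding lip_def
  proof (intro exI[of _ M] allI impI)
    fix t t' assume "t \<ge> T" "t' \<ge> T"
    then show "\<bar>f t - f t'\<bar> \<le> M * \<bar>t - t'\<bar>"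
      using *[of t t'] *[of t' t] by (cases "t \<le> t'") (auto simp: abs_minus_commute)
  qed
qed

lemma not_tendsto0:
  fixes g :: "real \<Rightarrow> real"
  assumes "\<not> (g \<longlongrightarrow> 0) at_top"
  shows "\<exists>\<epsilon>>0. \<forall>N. \<exists>t\<ge>N. \<bar>g t\<bar> \<ge> \<epsilon>"
proof (rule ccontr)
  assume "\<not> ?thesis"
  then have "\<forall>\<epsilon>>0. \<exists>N. \<forall>t\<ge>N. \<bar>g t\<bar> < \<epsilon>" by (meson not_le)
  then have "(g \<longlongrightarrow> 0) at_top"
    by (auto simp: tendsto_iff eventually_at_top_linorder dist_real_def)
  then show False using assms by simp
qed

lemma barbalatA:
  fixes f g :: "real \<Rightarrow> real"
  assumes lim: "(f \<longlongrightarrow> L) at_top"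
    and der: "\<And>t. t \<ge> T \<Longrightarrow> (f has_real_derivative g t) (at t within {T..})"
    and lg: "lip T g"
  shows "(g \<longlongrightarrow> 0) at_top"
proof (rule ccontr)
  assume "\<not> ?thesis"
  then obtain \<epsilon> where \<epsilon>: "\<epsilon> > 0" "\<And>N. \<exists>t\<ge>N. \<bar>g t\<bar> \<ge> \<epsilon>" using not_tendsto0 by blast
  obtain K where K: "K > 0" "\<And>t t'. t \<ge> T \<Longrightarrow> t' \<ge> T \<Longrightarrow> \<bar>g t - g t'\<bar> \<le> K * \<bar>t - t'\<bar>" using lipE[OF lg] by blast
  define h where "h = \<epsilon> / (2 * K)"
  have h: "h > 0" "K * h = \<epsilon> / 2" using \<epsilon> K by (auto simp: h_def)
  have "\<epsilon> * h / 4 > 0" using \<epsilon> h by simp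
  then have "\<forall>\<^sub>F t in at_top. dist (f t) L < \<epsilon> * h / 4" using lim[unfolded tendsto_iff] by blast
  then obtain T1 where T1: "\<And>t. t \<ge> T1 \<Longrightarrow> \<bar>f t - L\<bar> < \<epsilon> * h / 4"
    by (auto simp: eventually_at_top_linorder dist_real_def)
  obtain t where t: "t \<ge> max T T1" "\<bar>g t\<bar> \<ge> \<epsilon>" using \<epsilon>(2) by blast
  have close: "\<bar>g \<theta> - g t\<bar> \<le> \<epsilon> / 2" if "\<theta> \<in> {t..t+h}" for \<theta>
  proof -
    have "\<bar>g \<theta> - g t\<bar> \<le> K * \<bar>\<theta> - t\<bar>" using K(2)[of \<theta> t] that t by auto
    also have "\<dots> \<le> K * h" using that K by (intro mult_left_mono) auto
    finally show ?thesis using h by simp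
  qed
  have "\<exists>\<xi>\<in>{t..t+h}. f (t+h) - f t = g \<xi> * (t + h - t)"
  proof (rule mvt_real)
    show "t \<le> t + h" using h by simp
    fix \<theta> assume th: "\<theta> \<in> {t..t+h}"
    then have "\<theta> \<ge> T" using t by auto
    show "(f has_real_derivative g \<theta>) (at \<theta> within {t..t+h})"
      by (rule has_field_derivative_subset[OF der[OF \<open>\<theta> \<ge> T\<close>]]) (use t in auto)
  qed
  then obtain \<xi> where \<xi>: "\<xi> \<in> {t..t+h}" "f (t+h) - f t = g \<xi> * (t + h - t)" by blast
  have "\<bar>g \<xi>\<bar> \<ge> \<epsilon> / 2" using close[OF \<xi>(1)] t(2) by linarith
  then have "\<bar>f (t+h) - f t\<bar> \<ge> \<epsilon> / 2 * h" using \<xi>(2) h by (simp add: abs_mult mult_right_mono)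
  moreover have "\<bar>f (t+h) - f t\<bar> < \<epsilon> * h / 2"
  proof -
    have a: "\<bar>f (t+h) - L\<bar> < \<epsilon> * h / 4" "\<bar>f t - L\<bar> < \<epsilon> * h / 4" using T1[of t] T1[of "t+h"] t h by auto
    then show ?thesis by arith
  qed
  ultimately show False by simp
qed

lemma barbalatB:
  fixes V D f :: "real \<Rightarrow> real"
  assumes der: "\<And>t. t \<ge> T \<Longrightarrow> (V has_real_derivative D t) (at t within {T..})"
    and Df: "\<And>t. t \<ge> T \<Longrightarrow> D t \<le> - f t"
    and f0: "\<And>t. t \<ge> T \<Longrightarrow> f t \<ge> 0"
    and Vm: "\<And>t. t \<ge> T \<Longrightarrow> V t \<ge> m"
    and lf: "lip T f"
  shows "(f \<longlongrightarrow> 0) at_top"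
proof (rule ccontr)
  assume "\<not> ?thesis"
  then obtain \<epsilon> where \<epsilon>: "\<epsilon> > 0" "\<And>N. \<exists>t\<ge>N. \<bar>f t\<bar> \<ge> \<epsilon>" using not_tendsto0 by blast
  obtain K where K: "K > 0" "\<And>t t'. t \<ge> T \<Longrightarrow> t' \<ge> T \<Longrightarrow> \<bar>f t - f t'\<bar> \<le> K * \<bar>t - t'\<bar>" using lipE[OF lf] by blast
  define h where "h = \<epsilon> / (2 * K)"
  have h: "h > 0" "K * h = \<epsilon> / 2" using \<epsilon> K by (auto simp: h_def)
  have der': "(V has_real_derivative D \<theta>) (at \<theta> within {a..b})" if "T \<le> a" "\<theta> \<in> {a..b}" for a b \<theta>
    using der[of \<theta>] that by (auto intro: has_field_derivative_subset)
  have mono: "V b \<le> V a" if "T \<le> a" "a \<le> b" for a b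
  proof (rule deriv_nonpos_mono[OF that(2) der'[OF that(1)]])
    fix t assume "t \<in> {a..b}"
    then have "t \<ge> T" using that by auto
    then show "D t \<le> 0" using Df[of t] f0[of t] by simp
  qed
  define I where "I = Inf (V ` {T..})"
  have bdd: "bdd_below (V ` {T..})" using Vm by (auto intro!: bdd_belowI[of _ m])
  have "I < V T + \<epsilon> * h / 2 \<longrightarrow> True" by simp
  have "\<exists>y\<in>V ` {T..}. y < I + \<epsilon> * h / 2"
    using cInf_less_iff[OF _ bdd, of "I + \<epsilon> * h / 2"] \<epsilon> h unfolding I_def by auto
  then obtain t0 where t0: "t0 \<ge> T" "V t0 < I + \<epsilon> * h / 2" by auto
  obtain t where t: "t \<ge> t0" "\<bar>f t\<bar> \<ge> \<epsilon>" using \<epsilon>(2) by blast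
  have big: "f \<theta> \<ge> \<epsilon> / 2" if "\<theta> \<in> {t..t+h}" for \<theta>
  proof -
    have "\<bar>f \<theta> - f t\<bar> \<le> K * \<bar>\<theta> - t\<bar>" using K(2)[of \<theta> t] that t t0 by auto
    also have "\<dots> \<le> K * h" using that K by (intro mult_left_mono) auto
    finally show ?thesis using h t f0[of t] t0 by auto
  qed
  have "V (t+h) + \<epsilon>/2 * (t+h) \<le> V t + \<epsilon>/2 * t"
  proof (rule deriv_nonpos_mono[where f = "\<lambda>\<theta>. V \<theta> + \<epsilon>/2 * \<theta>" and f' = "\<lambda>\<theta>. D \<theta> + \<epsilon>/2"])
    show "t \<le> t + h" using h by simp
    fix \<theta> assume th: "\<theta> \<in> {t..t+h}"
    show "((\<lambda>\<theta>. V \<theta> + \<epsilon>/2 * \<theta>) has_real_derivative D \<theta> + \<epsilon>/2) (at \<theta> within {t..t+h})"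
      using der'[of t \<theta> "t+h"] th t t0 by (auto intro!: derivative_eq_intros)
    show "D \<theta> + \<epsilon>/2 \<le> 0" using Df[of \<theta>] big[OF th] th t t0 by auto
  qed
  moreover have "\<epsilon>/2 * (t+h) = \<epsilon>/2 * t + \<epsilon>/2 * h" by (simp add: distrib_left)
  ultimately have "V (t+h) \<le> V t - \<epsilon> / 2 * h" by linarith
  moreover have "V t \<le> V t0" using mono t t0 by auto
  moreover have "I \<le> V (t+h)" unfolding I_def using bdd t t0 h by (auto intro!: cInf_lower)
  ultimately show False using t0 by (simp add: algebra_simps)
qed

locale sol =
  fixes s d k dl p N mu q b tau :: real and x y v z :: "real \<Rightarrow> real"
  assumes pos: "s > 0" "d > 0" "k > 0" "dl > 0" "p > 0" "N > 0" "mu > 0" "q > 0" "b > 0" "tau > 0"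
    and sol: "is_solution s d k dl p N mu q b tau x y v z"
    and adm: "admissible tau x y v z"
begin

abbreviation "c \<equiv> k * exp (- dl * tau)"

lemma c_pos: "c > 0" using pos by simp

lemma cx: "continuous_on {-tau..} x" and cv: "continuous_on {-tau..} v"
  and cy: "continuous_on {0..} y" and cz: "continuous_on {0..} z"
  using sol unfolding is_solution_def by auto

lemma dx0: "t \<ge> 0 \<Longrightarrow> (x has_real_derivative (s - d * x t - k * x t * v t)) (at t within {0..})"
  and dy0: "t \<ge> 0 \<Longrightarrow> (y has_real_derivative (c * x (t - tau) * v (t - tau) - dl * y t - p * y t * z t)) (at t within {0..})"
  and dv0: "t \<ge> 0 \<Longrightarrow> (v has_real_derivative (N * dl * y t - mu * v t)) (at t within {0..})"
  and dz0: "t \<ge> 0 \<Longrightarrow> (z has_real_derivative (q * y t * z t - b * z t)) (at t within {0..})"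
  using sol unfolding is_solution_def by (auto simp: mult.assoc)


lemma dx: assumes a: "0 \<le> a" "t \<in> S" "S \<subseteq> {a..}" shows "(x has_real_derivative (s - d * x t - k * x t * v t)) (at t within S)"
proof -
  have "t \<ge> 0" using a by auto
  show ?thesis by (rule has_field_derivative_subset[OF dx0[OF \<open>t \<ge> 0\<close>]]) (use a in auto)
qed
lemma dy: assumes a: "0 \<le> a" "t \<in> S" "S \<subseteq> {a..}" shows "(y has_real_derivative (c * x (t - tau) * v (t - tau) - dl * y t - p * y t * z t)) (at t within S)"
proof -
  have "t \<ge> 0" using a by auto
  show ?thesis by (rule has_field_derivative_subset[OF dy0[OF \<open>t \<ge> 0\<close>]]) (use a in auto)
qed
lemma dv: assumes a: "0 \<le> a" "t \<in> S" "S \<subseteq> {a..}" shows "(v has_real_derivative (N * dl * y t - mu * v t)) (at t within S)"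
proof -
  have "t \<ge> 0" using a by auto
  show ?thesis by (rule has_field_derivative_subset[OF dv0[OF \<open>t \<ge> 0\<close>]]) (use a in auto)
qed
lemma dz: assumes a: "0 \<le> a" "t \<in> S" "S \<subseteq> {a..}" shows "(z has_real_derivative (q * y t * z t - b * z t)) (at t within S)"
proof -
  have "t \<ge> 0" using a by auto
  show ?thesis by (rule has_field_derivative_subset[OF dz0[OF \<open>t \<ge> 0\<close>]]) (use a in auto)
qed

lemma adm_x: "t \<in> {-tau..0} \<Longrightarrow> x t \<ge> 0" and adm_v: "t \<in> {-tau..0} \<Longrightarrow> v t \<ge> 0"
  and adm_y: "y 0 \<ge> 0" and adm_z: "z 0 \<ge> 0"
  using adm unfolding admissible_def by auto

lemma cont_sub: "continuous_on {-tau..} (f::real\<Rightarrow>real) \<Longrightarrow> -tau \<le> lo \<Longrightarrow> continuous_on {lo..hi} f"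
  by (erule continuous_on_subset) auto
lemma cont_sub0: "continuous_on {0..} (f::real\<Rightarrow>real) \<Longrightarrow> 0 \<le> lo \<Longrightarrow> continuous_on {lo..hi} f"
  by (erule continuous_on_subset) auto

lemma x_if: assumes "0 \<le> t0" "t \<in> {t0..t1}"
  shows "(x has_real_derivative (s - (d + k * v t) * x t)) (at t within {t0..t1})"
  using dx[OF assms(1) assms(2)] by (simp add: algebra_simps)

lemma y_if: assumes "0 \<le> t0" "t \<in> {t0..t1}"
  shows "(y has_real_derivative (c * x (t - tau) * v (t - tau) - (dl + p * z t) * y t)) (at t within {t0..t1})"
  using dy[OF assms(1) assms(2)] by (simp add: algebra_simps)

lemma v_if: assumes "0 \<le> t0" "t \<in> {t0..t1}"
  shows "(v has_real_derivative (N * dl * y t - mu * v t)) (at t within {t0..t1})"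
  using dv[OF assms(1) assms(2)] by simp

lemma z_if: assumes "0 \<le> t0" "t \<in> {t0..t1}"
  shows "(z has_real_derivative (0 - (b - q * y t) * z t)) (at t within {t0..t1})"
  using dz[OF assms(1) assms(2)] by (simp add: algebra_simps)

lemma ca_x: assumes "0 \<le> t0" shows "continuous_on {t0..t1} (\<lambda>t. d + k * v t)"
proof -
  have "-tau \<le> t0" using pos assms by simp
  then have "continuous_on {t0..t1} v" by (rule cont_sub[OF cv])
  then show ?thesis by (intro continuous_intros)
qed
lemma ca_y: assumes "0 \<le> t0" shows "continuous_on {t0..t1} (\<lambda>t. dl + p * z t)"
  using cont_sub0[OF cz assms, of t1] by (intro continuous_intros)
lemma ca_v: "continuous_on {t0..t1} (\<lambda>t. mu)"
  by (intro continuous_intros)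
lemma ca_z: assumes "0 \<le> t0" shows "continuous_on {t0..t1} (\<lambda>t. b - q * y t)"
  using cont_sub0[OF cy assms, of t1] by (intro continuous_intros)

lemma x_nonneg: assumes "t \<ge> -tau" shows "x t \<ge> 0"
proof (cases "t \<le> 0")
  case True then show ?thesis using adm_x assms by auto
next
  case False
  show ?thesis
    by (rule intfactor_nonneg[where lo = 0 and u = x and g = "\<lambda>_. s" and a = "\<lambda>t. d + k * v t"])
       (use False pos adm_x[of 0] x_if ca_x in auto)
qed

lemma x_pos: assumes "t > 0" shows "x t > 0"
  by (rule intfactor_strict[where lo = 0 and u = x and g = "\<lambda>_. s" and a = "\<lambda>t. d + k * v t"])
     (use assms pos adm_x[of 0] x_if ca_x in auto)

lemma yv_nonneg_n: "\<forall>t\<in>{0..real n * tau}. y t \<ge> 0 \<and> v t \<ge> 0"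
proof (induction n)
  case 0
  then show ?case using adm_y adm_v[of 0] pos by auto
next
  case (Suc n)
  have g: "c * x (\<theta> - tau) * v (\<theta> - tau) \<ge> 0" if "\<theta> \<in> {0..real (Suc n) * tau}" for \<theta>
  proof -
    have "x (\<theta> - tau) \<ge> 0" using x_nonneg that by auto
    moreover have "v (\<theta> - tau) \<ge> 0"
    proof (cases "\<theta> - tau \<le> 0")
      case True then show ?thesis using adm_v that by auto
    next
      case False
      then have "\<theta> - tau \<in> {0..real n * tau}" using that by (auto simp: algebra_simps)
      then show ?thesis using Suc.IH by auto
    qed
    ultimately show ?thesis using c_pos by simp
  qed
  have yn: "y t \<ge> 0" if "t \<in> {0..real (Suc n) * tau}" for t
    by (rule intfactor_nonneg[where lo = 0 and u = y and g = "\<lambda>\<theta>. c * x (\<theta> - tau) * v (\<theta> - tau)" and a = "\<lambda>t. dl + p * z t"])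
       (use that adm_y y_if ca_y g in auto)
  have vn: "v t \<ge> 0" if "t \<in> {0..real (Suc n) * tau}" for t
    by (rule intfactor_nonneg[where lo = 0 and u = v and g = "\<lambda>\<theta>. N * dl * y \<theta>" and a = "\<lambda>t. mu"])
       (use that adm_v[of 0] pos v_if ca_v yn in auto)
  show ?case using yn vn by auto
qed

lemma yv_nonneg: assumes "t \<ge> 0" shows "y t \<ge> 0" "v t \<ge> 0"
proof -
  obtain n where "t / tau \<le> real n" using real_arch_simple by blast
  then have "t \<le> real n * tau" using pos by (simp add: field_simps)
  then show "y t \<ge> 0" "v t \<ge> 0" using yv_nonneg_n[of n] assms by auto
qed

lemma v_nonneg: "t \<ge> -tau \<Longrightarrow> v t \<ge> 0"
  using yv_nonneg(2)[of t] adm_v[of t] by (cases "t \<le> 0") auto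

lemma y_nonneg: "t \<ge> 0 \<Longrightarrow> y t \<ge> 0" using yv_nonneg by blast

lemma g_y_nonneg: "\<theta> \<ge> 0 \<Longrightarrow> c * x (\<theta> - tau) * v (\<theta> - tau) \<ge> 0"
  using x_nonneg[of "\<theta> - tau"] v_nonneg[of "\<theta> - tau"] c_pos by simp

lemma z_nonneg: assumes "t \<ge> 0" shows "z t \<ge> 0"
  by (rule intfactor_nonneg[where lo = 0 and u = z and g = "\<lambda>_. 0" and a = "\<lambda>t. b - q * y t"])
     (use assms adm_z z_if ca_z in auto)

lemma z_pos: assumes "t \<ge> 0" "z 0 > 0" shows "z t > 0"
  by (rule intfactor_pos[where lo = 0 and u = z and g = "\<lambda>_. 0" and a = "\<lambda>t. b - q * y t"])
     (use assms z_if ca_z in auto)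

lemma y_pos_after: assumes "0 \<le> t0" "t0 \<le> t" "y t0 > 0" shows "y t > 0"
  by (rule intfactor_pos[where lo = t0 and u = y and g = "\<lambda>\<theta>. c * x (\<theta> - tau) * v (\<theta> - tau)" and a = "\<lambda>t. dl + p * z t"])
     (use assms y_if ca_y g_y_nonneg in auto)

lemma v_pos_after: assumes "0 \<le> t0" "t0 \<le> t" "v t0 > 0" shows "v t > 0"
  by (rule intfactor_pos[where lo = t0 and u = v and g = "\<lambda>\<theta>. N * dl * y \<theta>" and a = "\<lambda>t. mu"])
     (use assms pos v_if ca_v y_nonneg in auto)

lemma v_pos_from_y: assumes "0 \<le> t0" "t0 < t" "y t0 > 0" shows "v t > 0"
proof (rule intfactor_strict[where lo = t0 and u = v and g = "\<lambda>\<theta>. N * dl * y \<theta>" and a = "\<lambda>t. mu"])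
  show "v t0 \<ge> 0" using v_nonneg assms pos by auto
  fix \<theta> assume "\<theta> \<in> {t0<..t}"
  then have "y \<theta> > 0" using y_pos_after[of t0 \<theta>] assms by auto
  then show "N * dl * y \<theta> > 0" using pos by simp
qed (use assms pos v_if ca_v y_nonneg in auto)

end

context sol
begin

lemma cP: "continuous_on {-tau..} (\<lambda>\<theta>. x \<theta> * v \<theta>)"
  using cx cv by (intro continuous_intros)

lemma y_strict: assumes "t0 \<ge> 0" "x (t0 - tau) * v (t0 - tau) > 0"
  shows "\<exists>t1>t0. y t1 > 0"
proof -
  let ?P = "\<lambda>\<theta>. x \<theta> * v \<theta>"
  have "t0 - tau \<in> {-tau..}" using assms by auto
  then obtain \<delta> where \<delta>: "\<delta> > 0" "\<And>\<theta>. \<theta> \<in> {-tau..} \<Longrightarrow> dist \<theta> (t0 - tau) < \<delta> \<Longrightarrow> dist (?P \<theta>) (?P (t0 - tau)) < ?P (t0 - tau)"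
    using cP assms(2) unfolding continuous_on_iff by metis
  have Ppos: "?P \<theta> > 0" if "\<theta> \<in> {-tau..}" "dist \<theta> (t0 - tau) < \<delta>" for \<theta>
    using \<delta>(2)[OF that] by (auto simp: dist_real_def)
  define t1 where "t1 = t0 + \<delta> / 2"
  have "y t1 > 0"
  proof (rule intfactor_strict[where lo = t0 and hi = t1 and u = y and g = "\<lambda>\<theta>. c * x (\<theta> - tau) * v (\<theta> - tau)" and a = "\<lambda>t. dl + p * z t"])
    show "t0 \<le> t1" "t0 < t1" using \<delta> by (auto simp: t1_def)
    show "y t0 \<ge> 0" using y_nonneg assms by auto
    show "\<And>t. t \<in> {t0..t1} \<Longrightarrow> (y has_real_derivative (c * x (t - tau) * v (t - tau) - (dl + p * z t) * y t)) (at t within {t0..t1})"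
      by (rule y_if[OF assms(1)])
    show "continuous_on {t0..t1} (\<lambda>t. dl + p * z t)" by (rule ca_y[OF assms(1)])
    show "\<And>t. t \<in> {t0..t1} \<Longrightarrow> c * x (t - tau) * v (t - tau) \<ge> 0"
      using g_y_nonneg assms by auto
    fix \<theta> assume th: "\<theta> \<in> {t0<..t1}"
    have "?P (\<theta> - tau) > 0"
      by (rule Ppos) (use th assms \<delta> in \<open>auto simp: t1_def dist_real_def\<close>)
    then show "c * x (\<theta> - tau) * v (\<theta> - tau) > 0" using c_pos
      by (metis mult.assoc mult_pos_pos)
  qed
  moreover have "t1 > t0" using \<delta> by (simp add: t1_def)
  ultimately show ?thesis by blast
qed

lemma start:
  assumes "y 0 + x (-tau) * v (-tau) > 0 \<or> v 0 > 0"
  shows "\<exists>T\<ge>tau. (\<forall>t\<ge>T-tau. x t > 0 \<and> v t > 0) \<and> (\<forall>t\<ge>T. y t > 0)"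
proof -
  have "\<exists>t1\<ge>0. y t1 > 0"
  proof (cases "y 0 > 0")
    case True then show ?thesis by blast
  next
    case False
    then have y0: "y 0 = 0" using adm_y by simp
    show ?thesis
    proof (cases "x (-tau) * v (-tau) > 0")
      case True
      then obtain t1 where "t1 > 0" "y t1 > 0" using y_strict[of 0] by auto
      then show ?thesis by (intro exI[of _ t1]) auto
    next
      case False
      then have "v 0 > 0" using assms y0 by auto
      then have "v 1 > 0" using v_pos_after[of 0 1] by simp
      moreover have "x 1 > 0" using x_pos by simp
      ultimately have "x (1 + tau - tau) * v (1 + tau - tau) > 0" by simp
      then obtain t1 where "t1 > 1 + tau" "y t1 > 0" using y_strict[of "1 + tau"] pos by auto
      then show ?thesis using pos by (intro exI[of _ t1]) auto
    qed
  qed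
  then obtain t1 where t1: "t1 \<ge> 0" "y t1 > 0" by blast
  show ?thesis
  proof (intro exI[of _ "t1 + tau + 1"] conjI allI impI)
    show "tau \<le> t1 + tau + 1" using t1 by simp
    fix t assume "t1 + tau + 1 - tau \<le> t"
    then show "x t > 0" "v t > 0" using x_pos t1 v_pos_from_y[of t1 t] by auto
  next
    fix t assume "t1 + tau + 1 \<le> t"
    then show "y t > 0" using y_pos_after[of t1 t] t1 pos by auto
  qed
qed

end

lemma hh_deriv:
  assumes "(u has_real_derivative u') (at t within S)" "us = 0 \<or> u t > 0"
  shows "((\<lambda>t. hh us (u t)) has_real_derivative ((1 - us / u t) * u')) (at t within S)"
proof (cases "us = 0")
  case True
  then show ?thesis using assms(1) by simp
next
  case False
  then have ut: "u t > 0" using assms(2) by simp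
  have "((\<lambda>t. u t - us * ln (u t) - (us - us * ln us)) has_real_derivative (u' - us * (u' / u t) - 0)) (at t within S)"
    by (intro DERIV_diff DERIV_cmult DERIV_const assms(1) DERIV_chain2[OF DERIV_ln_divide[OF ut] assms(1), THEN DERIV_cong]) auto
  moreover have "u' - us * (u' / u t) - 0 = (1 - us / u t) * u'" by (simp add: algebra_simps)
  ultimately show ?thesis unfolding hh_def by simp
qed

lemma Icc_to_Ici:
  fixes f :: "real \<Rightarrow> real"
  assumes "(f has_real_derivative D) (at t within {T..B})" "t < B"
  shows "(f has_real_derivative D) (at t within {T..})"
proof -
  have "at t within {T..B} = at t within {T..}"
    by (rule at_within_nhd[of t "{..<B}"]) (use assms(2) in auto)
  then show ?thesis using assms(1) by simp
qed

lemma hh_cont: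
  assumes "continuous_on S u" "us = 0 \<or> (\<forall>t\<in>S. u t > 0)"
  shows "continuous_on S (\<lambda>t. hh us (u t))"
proof (cases "us = 0")
  case True then show ?thesis using assms(1) by simp
next
  case False
  then have "\<forall>t\<in>S. u t > 0" using assms(2) by simp
  then show ?thesis unfolding hh_def using assms(1) by (intro continuous_intros) auto
qed

context sol
begin

definition Vf :: "real \<Rightarrow> real \<Rightarrow> real \<Rightarrow> real \<Rightarrow> real \<Rightarrow> real \<Rightarrow> real" where
  "Vf xs ys vs zs a t = exp (- dl * tau) * hh xs (x t) + hh ys (y t) + a * hh vs (v t) + p / q * hh zs (z t)
     + c * integral {t - tau..t} (\<lambda>\<theta>. hh (xs * vs) (x \<theta> * v \<theta>))"

definition DV :: "real \<Rightarrow> real \<Rightarrow> real \<Rightarrow> real \<Rightarrow> real \<Rightarrow> real \<Rightarrow> real" where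
  "DV xs ys vs zs a t = exp (- dl * tau) * ((1 - xs / x t) * (s - d * x t - k * x t * v t))
     + (1 - ys / y t) * (c * x (t - tau) * v (t - tau) - dl * y t - p * y t * z t)
     + a * ((1 - vs / v t) * (N * dl * y t - mu * v t))
     + p / q * ((1 - zs / z t) * (q * y t * z t - b * z t))
     + c * (hh (xs * vs) (x t * v t) - hh (xs * vs) (x (t - tau) * v (t - tau)))"

lemma dV:
  assumes T: "T \<ge> 0" and hx: "\<And>t. t \<ge> T \<Longrightarrow> x t > 0"
    and hy: "ys = 0 \<or> (\<forall>t\<ge>T. y t > 0)" and hv: "vs = 0 \<or> (\<forall>t\<ge>T. v t > 0)"
    and hz: "zs = 0 \<or> (\<forall>t\<ge>T. z t > 0)" and hP: "xs * vs = 0 \<or> (\<forall>t\<ge>T - tau. x t * v t > 0)"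
    and t: "t \<ge> T"
  shows "(Vf xs ys vs zs a has_real_derivative DV xs ys vs zs a t) (at t within {T..})"
proof -
  define F where "F = (\<lambda>\<theta>. hh (xs * vs) (x \<theta> * v \<theta>))"
  define B where "B = t + 1"
  have tB: "t < B" "t \<in> {T..B}" using t by (auto simp: B_def)
  have cF: "continuous_on {T - tau..} F" unfolding F_def
  proof (rule hh_cont)
    show "continuous_on {T - tau..} (\<lambda>\<theta>. x \<theta> * v \<theta>)" by (rule continuous_on_subset[OF cP]) (use T in auto)
    show "xs * vs = 0 \<or> (\<forall>\<theta>\<in>{T - tau..}. x \<theta> * v \<theta> > 0)" using hP by auto
  qed
  have cFI: "continuous_on {T - tau..B} F" by (rule continuous_on_subset[OF cF]) auto
  define \<Phi> where "\<Phi> = (\<lambda>u. integral {T - tau..u} F)"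
  have dPhi: "(\<Phi> has_real_derivative F u) (at u within {T - tau..B})" if "u \<in> {T - tau..B}" for u
    unfolding \<Phi>_def by (rule integral_has_real_derivative[OF cFI that])
  have split: "integral {u - tau..u} F = \<Phi> u - \<Phi> (u - tau)" if "u \<ge> T" for u
  proof -
    have "F integrable_on {T - tau..u}"
      by (rule integrable_continuous_real, rule continuous_on_subset[OF cF]) auto
    then have "integral {T - tau..u - tau} F + integral {u - tau..u} F = integral {T - tau..u} F"
      by (intro Henstock_Kurzweil_Integration.integral_combine) (use that pos in auto)
    then show ?thesis unfolding \<Phi>_def by simp
  qed
  have d1: "(\<Phi> has_real_derivative F t) (at t within {T..B})"
    by (rule has_field_derivative_subset[OF dPhi]) (use tB pos in auto)
  have d2: "((\<lambda>u. \<Phi> (u - tau)) has_real_derivative F (t - tau)) (at t within {T..B})"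
  proof -
    have g: "((\<lambda>u. u - tau) has_real_derivative 1) (at t within {T..B})"
      by (intro derivative_eq_intros) auto
    have img: "(\<lambda>u. u - tau) ` {T..B} \<subseteq> {T - tau..B}" using pos by auto
    have "(\<Phi> has_real_derivative F (t - tau)) (at (t - tau) within (\<lambda>u. u - tau) ` {T..B})"
      by (rule has_field_derivative_subset[OF dPhi img]) (use tB pos in auto)
    from DERIV_image_chain[OF this g] show ?thesis by (simp add: o_def)
  qed
  have S: "{T..B} \<subseteq> {T..}" by auto
  have ex: "((\<lambda>t. exp (- dl * tau) * hh xs (x t)) has_real_derivative exp (- dl * tau) * ((1 - xs / x t) * (s - d * x t - k * x t * v t))) (at t within {T..B})"
    by (intro DERIV_cmult hh_deriv dx[OF T tB(2)]) (use hx t in auto)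
  have ey: "((\<lambda>t. hh ys (y t)) has_real_derivative (1 - ys / y t) * (c * x (t - tau) * v (t - tau) - dl * y t - p * y t * z t)) (at t within {T..B})"
    by (intro hh_deriv dy[OF T tB(2)]) (use hy t in auto)
  have ev: "((\<lambda>t. a * hh vs (v t)) has_real_derivative a * ((1 - vs / v t) * (N * dl * y t - mu * v t))) (at t within {T..B})"
    by (intro DERIV_cmult hh_deriv dv[OF T tB(2)]) (use hv t in auto)
  have ez: "((\<lambda>t. p / q * hh zs (z t)) has_real_derivative p / q * ((1 - zs / z t) * (q * y t * z t - b * z t))) (at t within {T..B})"
    by (intro DERIV_cmult hh_deriv dz[OF T tB(2)]) (use hz t in auto)
  have eI: "((\<lambda>t. c * (\<Phi> t - \<Phi> (t - tau))) has_real_derivative c * (F t - F (t - tau))) (at t within {T..B})"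
    by (intro DERIV_cmult DERIV_diff d1 d2)
  have all: "((\<lambda>t. exp (- dl * tau) * hh xs (x t) + hh ys (y t) + a * hh vs (v t) + p / q * hh zs (z t) + c * (\<Phi> t - \<Phi> (t - tau)))
     has_real_derivative DV xs ys vs zs a t) (at t within {T..B})"
    unfolding DV_def by (intro DERIV_add ex ey ev ez eI[unfolded F_def])
  have "(Vf xs ys vs zs a has_real_derivative DV xs ys vs zs a t) (at t within {T..B})"
  proof (rule has_field_derivative_transform_within[OF all zero_less_one tB(2)])
    fix u assume "u \<in> {T..B}"
    then show "exp (- dl * tau) * hh xs (x u) + hh ys (y u) + a * hh vs (v u) + p / q * hh zs (z u) + c * (\<Phi> u - \<Phi> (u - tau))
      = Vf xs ys vs zs a u" unfolding Vf_def F_def[symmetric] using split by auto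
  qed
  then show ?thesis by (rule Icc_to_Ici[OF _ tB(1)])
qed

end

lemma G_nonneg: "(w::real) > 0 \<Longrightarrow> w - 1 - ln w \<ge> 0"
  using ln_le_minus_one[of w] by simp

lemma alg_pos:
  fixes s d k E dl p N mu q b xs ys vs zs a X Y Vv Z Xt Vt :: real
  assumes pos: "s > 0" "d > 0" "k > 0" "E > 0" "dl > 0" "p > 0" "N > 0" "mu > 0" "q > 0" "b > 0"
    and eq: "xs > 0" "ys > 0" "vs > 0" "zs \<ge> 0"
    and r1: "s = d * xs + k * xs * vs"
    and r2: "k * E * xs * vs = dl * ys + p * ys * zs"
    and r3: "N * dl * ys = mu * vs"
    and ra: "a = k * E * xs / mu"
    and rz: "(zs = 0 \<and> q * ys \<le> b) \<or> q * ys = b"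
    and vals: "X > 0" "Y > 0" "Vv > 0" "Xt > 0" "Vt > 0" "Z \<ge> 0" "zs > 0 \<Longrightarrow> Z > 0"
  shows "E * ((1 - xs / X) * (s - d * X - k * X * Vv))
     + (1 - ys / Y) * (k * E * Xt * Vt - dl * Y - p * Y * Z)
     + a * ((1 - vs / Vv) * (N * dl * Y - mu * Vv))
     + p / q * ((1 - zs / Z) * (q * Y * Z - b * Z))
     + k * E * (hh (xs * vs) (X * Vv) - hh (xs * vs) (Xt * Vt)) \<le> - (E * d * (X - xs)^2 / X)"
proof -
  define c where "c = k * E"
  define A1 where "A1 = xs / X"
  define A2 where "A2 = Xt * Vt * ys / (xs * vs * Y)"
  define A3 where "A3 = Y * vs / (ys * Vv)"
  have Apos: "A1 > 0" "A2 > 0" "A3 > 0" using eq vals by (auto simp: A1_def A2_def A3_def)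
  have cpos: "c > 0" using pos by (simp add: c_def)
  have T1: "E * ((1 - xs / X) * (s - d * X - k * X * Vv)) =
      - (E * d * (X - xs)^2 / X) + c * xs * vs - c * X * Vv - c * xs * vs * A1 + c * xs * Vv"
    unfolding r1 c_def A1_def using vals eq by (simp add: field_simps power2_eq_square)
  have T2: "(1 - ys / Y) * (c * Xt * Vt - dl * Y - p * Y * Z) =
      c * Xt * Vt - dl * Y - p * Y * Z - c * xs * vs * A2 + dl * ys + p * ys * Z"
    unfolding A2_def using vals eq by (simp add: field_simps)
  have aN: "a * N * dl = c * xs * vs / ys" unfolding ra c_def using r3 eq pos
    by (simp add: field_simps)
  have amu: "a * mu = c * xs" unfolding ra c_def using pos by simp
  have T3: "a * ((1 - vs / Vv) * (N * dl * Y - mu * Vv)) =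
      (c * xs * vs / ys) * Y - c * xs * Vv - c * xs * vs * A3 + c * xs * vs"
  proof -
    have "a * ((1 - vs / Vv) * (N * dl * Y - mu * Vv)) = (a * N * dl) * Y - (a * mu) * Vv - (a * N * dl) * Y * vs / Vv + (a * mu) * vs"
      using vals by (simp add: field_simps)
    also have "\<dots> = (c * xs * vs / ys) * Y - c * xs * Vv - c * xs * vs * A3 + c * xs * vs"
      unfolding aN amu A3_def using vals eq by (simp add: field_simps)
    finally show ?thesis .
  qed
  have T4: "p / q * ((1 - zs / Z) * (q * Y * Z - b * Z)) = p * Z * Y - p * zs * Y - p * b / q * Z + p * b / q * zs"
  proof (cases "Z = 0")
    case True
    then have "zs = 0" using vals(7) eq(4) by force
    then show ?thesis using True by simp
  next
    case False
    then show ?thesis using pos by (simp add: field_simps)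
  qed
  have lnX: "ln (X * Vv) - ln (Xt * Vt) = - (ln A1 + ln A2 + ln A3)"
  proof -
    have "A1 * A2 * A3 = (Xt * Vt) / (X * Vv)" unfolding A1_def A2_def A3_def using eq vals
      by (simp add: field_simps)
    then have "ln (A1 * A2 * A3) = ln (Xt * Vt) - ln (X * Vv)" using vals by (simp add: ln_div)
    moreover have "ln (A1 * A2 * A3) = ln A1 + ln A2 + ln A3" using Apos by (simp add: ln_mult)
    ultimately show ?thesis by simp
  qed
  have T5: "c * (hh (xs * vs) (X * Vv) - hh (xs * vs) (Xt * Vt)) = c * X * Vv - c * Xt * Vt + c * xs * vs * (ln A1 + ln A2 + ln A3)"
  proof -
    have "hh (xs * vs) (X * Vv) - hh (xs * vs) (Xt * Vt) = X * Vv - Xt * Vt - xs * vs * (ln (X * Vv) - ln (Xt * Vt))"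
      unfolding hh_def by (simp add: algebra_simps)
    then have "hh (xs * vs) (X * Vv) - hh (xs * vs) (Xt * Vt) = X * Vv - Xt * Vt + xs * vs * (ln A1 + ln A2 + ln A3)"
      unfolding lnX by (simp add: algebra_simps)
    then have "c * (hh (xs * vs) (X * Vv) - hh (xs * vs) (Xt * Vt)) = c * (X * Vv - Xt * Vt + xs * vs * (ln A1 + ln A2 + ln A3))"
      by simp
    then show ?thesis by (simp add: algebra_simps)
  qed
  have cyY: "(c * xs * vs / ys) * Y = dl * Y + p * zs * Y"
  proof -
    have "c * xs * vs / ys = dl + p * zs" using r2 eq unfolding c_def by (simp add: field_simps)
    then show ?thesis by (simp add: algebra_simps)
  qed
  have dlys: "dl * ys = c * xs * vs - p * ys * zs" using r2 unfolding c_def by simp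
  have zterm: "p * (Z - zs) * (ys - b / q) \<le> 0"
  proof (cases "q * ys = b")
    case True then show ?thesis using pos by (simp add: field_simps)
  next
    case False
    then have "zs = 0" "q * ys \<le> b" using rz by auto
    moreover have "ys - b / q \<le> 0" using \<open>q * ys \<le> b\<close> pos by (simp add: field_simps)
    ultimately show ?thesis using pos vals by (simp add: mult_nonneg_nonpos)
  qed
  have sum: "E * ((1 - xs / X) * (s - d * X - k * X * Vv))
     + (1 - ys / Y) * (k * E * Xt * Vt - dl * Y - p * Y * Z)
     + a * ((1 - vs / Vv) * (N * dl * Y - mu * Vv))
     + p / q * ((1 - zs / Z) * (q * Y * Z - b * Z))
     + k * E * (hh (xs * vs) (X * Vv) - hh (xs * vs) (Xt * Vt))
     = - (E * d * (X - xs)^2 / X) - c * xs * vs * ((A1 - 1 - ln A1) + (A2 - 1 - ln A2) + (A3 - 1 - ln A3))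
       + p * (Z - zs) * (ys - b / q)"
  proof -
    have e: "p * (Z - zs) * (ys - b / q) = p * ys * Z - p * b / q * Z - p * ys * zs + p * b / q * zs"
      by (simp add: algebra_simps)
    show ?thesis
      unfolding c_def[symmetric] T1 T2 T3 T4 T5 cyY e using dlys
      by (simp add: algebra_simps)
  qed
  have "c * xs * vs * ((A1 - 1 - ln A1) + (A2 - 1 - ln A2) + (A3 - 1 - ln A3)) \<ge> 0"
    using G_nonneg[OF Apos(1)] G_nonneg[OF Apos(2)] G_nonneg[OF Apos(3)] cpos eq by simp
  then show ?thesis unfolding sum using zterm by linarith
qed

lemma alg_zero:
  fixes s d k E dl p N mu q b xs a X Y Vv Z Xt Vt :: real
  assumes pos: "s > 0" "d > 0" "k > 0" "E > 0" "dl > 0" "p > 0" "N > 0" "mu > 0" "q > 0" "b > 0"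
    and r1: "s = d * xs" and R: "k * E * xs \<le> mu / N" and ra: "a = 1 / N"
    and vals: "X > 0" "Y \<ge> 0" "Vv \<ge> 0" "Xt \<ge> 0" "Vt \<ge> 0" "Z \<ge> 0"
  shows "E * ((1 - xs / X) * (s - d * X - k * X * Vv))
     + (1 - 0 / Y) * (k * E * Xt * Vt - dl * Y - p * Y * Z)
     + a * ((1 - 0 / Vv) * (N * dl * Y - mu * Vv))
     + p / q * ((1 - 0 / Z) * (q * Y * Z - b * Z))
     + k * E * (hh (xs * 0) (X * Vv) - hh (xs * 0) (Xt * Vt)) \<le> - (E * d * (X - xs)^2 / X) - p * b / q * Z"
proof -
  have T1: "E * ((1 - xs / X) * (s - d * X - k * X * Vv)) = - (E * d * (X - xs)^2 / X) - k * E * X * Vv + k * E * xs * Vv"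
    unfolding r1 using vals by (simp add: field_simps power2_eq_square)
  have T3: "a * ((1 - 0 / Vv) * (N * dl * Y - mu * Vv)) = dl * Y - mu / N * Vv" unfolding ra using pos
    by (simp add: field_simps)
  have T4: "p / q * ((1 - 0 / Z) * (q * Y * Z - b * Z)) = p * Y * Z - p * b / q * Z" using pos
    by (simp add: field_simps)
  have "(k * E * xs - mu / N) * Vv \<le> 0" using R vals by (simp add: mult_nonpos_nonneg)
  then show ?thesis unfolding T1 T3 T4 by (simp add: algebra_simps)
qed

lemma tendsto_shift:
  fixes f :: "real \<Rightarrow> real"
  assumes "(f \<longlongrightarrow> L) at_top"
  shows "((\<lambda>t. f (t - c)) \<longlongrightarrow> L) at_top"
proof -
  have "filterlim (\<lambda>t. t - c) at_top at_top"
    unfolding filterlim_at_top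
  proof
    fix Z :: real
    show "\<forall>\<^sub>F t in at_top. Z \<le> t - c"
      using eventually_ge_at_top[of "Z + c"] by (rule eventually_mono) simp
  qed
  from filterlim_compose[OF assms this] show ?thesis by (simp add: o_def)
qed

lemma hh_bound: assumes "us \<ge> 0" "u \<ge> 0" "us > 0 \<Longrightarrow> u > 0" "hh us u \<le> K"
  shows "u \<le> us * (1 + sqrt (K / us))^2 + K"
proof (cases "us = 0")
  case True then show ?thesis using assms by simp
next
  case False
  then have "us > 0" using assms by simp
  then have "u \<le> us * (1 + sqrt (K / us))^2" using hh_upper assms by simp
  moreover have "K \<ge> 0" using hh_nonneg[of us u] assms \<open>us > 0\<close> by simp
  ultimately show ?thesis by simp
qed

context sol
begin

definition PH :: "real \<Rightarrow> real \<Rightarrow> real \<Rightarrow> real \<Rightarrow> real \<Rightarrow> bool" where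
  "PH T xs ys vs zs \<longleftrightarrow> T \<ge> 0 \<and> xs > 0 \<and> ys \<ge> 0 \<and> vs \<ge> 0 \<and> zs \<ge> 0 \<and> (\<forall>t\<ge>T. x t > 0)
     \<and> (ys = 0 \<or> (\<forall>t\<ge>T. y t > 0)) \<and> (vs = 0 \<or> (\<forall>t\<ge>T. v t > 0))
     \<and> (zs = 0 \<or> (\<forall>t\<ge>T. z t > 0)) \<and> (xs * vs = 0 \<or> (\<forall>t\<ge>T - tau. x t * v t > 0))"

lemma PH_dV: assumes "PH T xs ys vs zs" "t \<ge> T"
  shows "(Vf xs ys vs zs a has_real_derivative DV xs ys vs zs a t) (at t within {T..})"
proof -
  have h: "T \<ge> 0" "\<And>t. t \<ge> T \<Longrightarrow> x t > 0" "ys = 0 \<or> (\<forall>t\<ge>T. y t > 0)" "vs = 0 \<or> (\<forall>t\<ge>T. v t > 0)"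
    "zs = 0 \<or> (\<forall>t\<ge>T. z t > 0)" "xs * vs = 0 \<or> (\<forall>t\<ge>T - tau. x t * v t > 0)"
    using assms(1) unfolding PH_def by blast+
  show ?thesis by (rule dV[OF h assms(2)])
qed

lemma Vf_mono:
  assumes ph: "PH T xs ys vs zs" and hD: "\<And>t. t \<ge> T \<Longrightarrow> DV xs ys vs zs a t \<le> 0" and t: "t \<ge> T"
  shows "Vf xs ys vs zs a t \<le> Vf xs ys vs zs a T"
proof (rule deriv_nonpos_mono[OF t])
  fix u assume "u \<in> {T..t}"
  then show "(Vf xs ys vs zs a has_real_derivative DV xs ys vs zs a u) (at u within {T..t})"
    by (intro has_field_derivative_subset[OF PH_dV[OF ph]]) auto
  show "DV xs ys vs zs a u \<le> 0" using hD \<open>u \<in> {T..t}\<close> by auto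
qed

lemma pieces_nonneg:
  assumes ph: "PH T xs ys vs zs" and t: "t \<ge> T" and a: "a \<ge> 0"
  shows "hh xs (x t) \<ge> 0" "hh ys (y t) \<ge> 0" "hh vs (v t) \<ge> 0" "hh zs (z t) \<ge> 0"
    "integral {t - tau..t} (\<lambda>\<theta>. hh (xs * vs) (x \<theta> * v \<theta>)) \<ge> 0"
proof -
  have T: "T \<ge> 0" and xs: "xs > 0" "ys \<ge> 0" "vs \<ge> 0" "zs \<ge> 0" using ph by (auto simp: PH_def)
  have t0: "t \<ge> 0" using T t by simp
  show "hh xs (x t) \<ge> 0" using ph t by (intro hh_nonneg) (auto simp: PH_def)
  show "hh ys (y t) \<ge> 0" using ph t y_nonneg[OF t0] by (intro hh_nonneg') (auto simp: PH_def)
  show "hh vs (v t) \<ge> 0" using ph t yv_nonneg(2)[OF t0] by (intro hh_nonneg') (auto simp: PH_def)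
  show "hh zs (z t) \<ge> 0" using ph t z_nonneg[OF t0] by (intro hh_nonneg') (auto simp: PH_def)
  have cF: "continuous_on {t - tau..t} (\<lambda>\<theta>. hh (xs * vs) (x \<theta> * v \<theta>))"
  proof (rule hh_cont)
    show "continuous_on {t - tau..t} (\<lambda>\<theta>. x \<theta> * v \<theta>)" by (rule continuous_on_subset[OF cP]) (use t0 in auto)
    show "xs * vs = 0 \<or> (\<forall>\<theta>\<in>{t - tau..t}. x \<theta> * v \<theta> > 0)" using ph t by (auto simp: PH_def)
  qed
  show "integral {t - tau..t} (\<lambda>\<theta>. hh (xs * vs) (x \<theta> * v \<theta>)) \<ge> 0"
  proof (rule integral_nonneg[OF integrable_continuous_real[OF cF]])
    fix \<theta> assume th: "\<theta> \<in> {t - tau..t}"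
    then have "x \<theta> \<ge> 0" "v \<theta> \<ge> 0" using x_nonneg v_nonneg t0 by auto
    moreover have "xs * vs > 0 \<Longrightarrow> x \<theta> * v \<theta> > 0" using ph t th by (auto simp: PH_def)
    ultimately show "hh (xs * vs) (x \<theta> * v \<theta>) \<ge> 0" using xs by (intro hh_nonneg') auto
  qed
qed

lemma pieces_le:
  assumes ph: "PH T xs ys vs zs" and t: "t \<ge> T" and a: "a \<ge> 0"
  shows "exp (- dl * tau) * hh xs (x t) \<le> Vf xs ys vs zs a t"
    "hh ys (y t) \<le> Vf xs ys vs zs a t"
    "a * hh vs (v t) \<le> Vf xs ys vs zs a t"
    "p / q * hh zs (z t) \<le> Vf xs ys vs zs a t"
    "0 \<le> Vf xs ys vs zs a t"
proof -
  note nn = pieces_nonneg[OF ph t a]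
  have a1: "exp (- dl * tau) * hh xs (x t) \<ge> 0" using nn by simp
  have a3: "a * hh vs (v t) \<ge> 0" using nn a by simp
  have a4: "p / q * hh zs (z t) \<ge> 0" using nn pos by simp
  have a5: "c * integral {t - tau..t} (\<lambda>\<theta>. hh (xs * vs) (x \<theta> * v \<theta>)) \<ge> 0" using nn c_pos by simp
  note V = Vf_def[of xs ys vs zs a t]
  show "exp (- dl * tau) * hh xs (x t) \<le> Vf xs ys vs zs a t"
    "hh ys (y t) \<le> Vf xs ys vs zs a t"
    "a * hh vs (v t) \<le> Vf xs ys vs zs a t"
    "p / q * hh zs (z t) \<le> Vf xs ys vs zs a t"
    "0 \<le> Vf xs ys vs zs a t"
    unfolding V using a1 nn(2) a3 a4 a5 by linarith+
qed

end

lemma sq_tendsto0: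
  fixes f :: "real \<Rightarrow> real"
  assumes "((\<lambda>t. (f t)^2) \<longlongrightarrow> 0) F" shows "(f \<longlongrightarrow> 0) F"
proof -
  have "((\<lambda>t. sqrt ((f t)^2)) \<longlongrightarrow> sqrt 0) F" by (rule tendsto_real_sqrt[OF assms])
  then have "((\<lambda>t. \<bar>f t\<bar>) \<longlongrightarrow> 0) F" by simp
  then show ?thesis by (simp add: tendsto_rabs_zero_iff)
qed

lemma squeeze0:
  fixes f g :: "real \<Rightarrow> real"
  assumes "(g \<longlongrightarrow> 0) at_top" "\<And>t. t \<ge> T \<Longrightarrow> 0 \<le> f t" "\<And>t. t \<ge> T \<Longrightarrow> f t \<le> g t"
  shows "(f \<longlongrightarrow> 0) at_top"
proof (rule tendsto_sandwich[OF _ _ tendsto_const assms(1)])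
  show "\<forall>\<^sub>F t in at_top. 0 \<le> f t" using assms(2) eventually_ge_at_top[of T] by (rule eventually_mono[rotated]) 
  show "\<forall>\<^sub>F t in at_top. f t \<le> g t" using assms(3) eventually_ge_at_top[of T] by (rule eventually_mono[rotated])
qed

context sol
begin

lemma attract_generic:
  assumes ph: "PH T xs ys vs zs" and a: "a > 0"
    and r1: "s = d * xs + k * xs * vs" and r3: "N * dl * ys = mu * vs" and r2: "c * xs * vs = dl * ys + p * ys * zs"
    and hD: "\<And>t. t \<ge> T \<Longrightarrow> DV xs ys vs zs a t \<le> - (exp (- dl * tau) * d * (x t - xs)^2 / x t) - \<beta> * z t"
    and \<beta>: "\<beta> \<ge> 0"
  shows "(x \<longlongrightarrow> xs) at_top" "(v \<longlongrightarrow> vs) at_top" "(y \<longlongrightarrow> ys) at_top"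
    "ys > 0 \<Longrightarrow> (z \<longlongrightarrow> zs) at_top" "\<beta> > 0 \<Longrightarrow> (z \<longlongrightarrow> 0) at_top"
proof -
  define E where "E = exp (- dl * tau)"
  have E: "E > 0" by (simp add: E_def)
  have T0: "T \<ge> 0" and xs: "xs > 0" "ys \<ge> 0" "vs \<ge> 0" "zs \<ge> 0" and xp: "\<And>t. t \<ge> T \<Longrightarrow> x t > 0"
    using ph unfolding PH_def by auto
  have zn: "\<And>t. t \<ge> T \<Longrightarrow> z t \<ge> 0" using z_nonneg T0 by simp
  have yn: "\<And>t. t \<ge> T \<Longrightarrow> y t \<ge> 0" using y_nonneg T0 by simp
  have vn: "\<And>t. t \<ge> T \<Longrightarrow> v t \<ge> 0" using v_nonneg T0 pos by simp
  have hD0: "DV xs ys vs zs a t \<le> 0" if "t \<ge> T" for t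
  proof -
    have "exp (- dl * tau) * d * (x t - xs)^2 / x t \<ge> 0" using xp[OF that] pos by simp
    moreover have "\<beta> * z t \<ge> 0" using \<beta> zn[OF that] by simp
    ultimately show ?thesis using hD[OF that] by linarith
  qed
  define V0 where "V0 = Vf xs ys vs zs a T"
  have Vle: "Vf xs ys vs zs a t \<le> V0" if "t \<ge> T" for t
    unfolding V0_def by (rule Vf_mono[OF ph hD0 that])
  note PL = pieces_le[OF ph _ less_imp_le[OF a]]
  have Vnn: "\<And>t. t \<ge> T \<Longrightarrow> 0 \<le> Vf xs ys vs zs a t" using PL(5) by blast
  have hxb: "hh xs (x t) \<le> V0 / E" if "t \<ge> T" for t
    using PL(1)[OF that] Vle[OF that] E by (simp add: E_def field_simps)
  define Mx where "Mx = xs * (1 + sqrt ((V0 / E) / xs))^2 + V0 / E"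
  define mx where "mx = xs * exp (- ((V0 / E) / xs) - 1)"
  have mx: "mx > 0" using xs by (simp add: mx_def)
  have xM: "x t \<le> Mx" if "t \<ge> T" for t
    unfolding Mx_def using hh_bound[OF less_imp_le[OF xs(1)] less_imp_le[OF xp[OF that]] _ hxb[OF that]] xp[OF that] by simp
  have xm: "x t \<ge> mx" if "t \<ge> T" for t
    unfolding mx_def using hh_lower[OF xs(1) xp[OF that] hxb[OF that]] .
  have ypos_if: "ys > 0 \<Longrightarrow> t \<ge> T \<Longrightarrow> y t > 0" for t using ph unfolding PH_def by auto
  have vpos_if: "vs > 0 \<Longrightarrow> t \<ge> T \<Longrightarrow> v t > 0" for t using ph unfolding PH_def by auto
  have zpos_if: "zs > 0 \<Longrightarrow> t \<ge> T \<Longrightarrow> z t > 0" for t using ph unfolding PH_def by auto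
  have yM: "y t \<le> ys * (1 + sqrt (V0 / ys))^2 + V0" if "t \<ge> T" for t
    using hh_bound[OF xs(2) yn[OF that] ypos_if[OF _ that]] PL(2)[OF that] Vle[OF that] by simp
  have vM: "v t \<le> vs * (1 + sqrt ((V0 / a) / vs))^2 + V0 / a" if "t \<ge> T" for t
  proof -
    have "a * hh vs (v t) \<le> V0" using PL(3)[OF that] Vle[OF that] by linarith
    then have "hh vs (v t) \<le> V0 / a" using a by (simp add: field_simps)
    from hh_bound[OF xs(3) vn[OF that] vpos_if[OF _ that] this] show ?thesis .
  qed
  have zM: "z t \<le> zs * (1 + sqrt ((V0 * q / p) / zs))^2 + V0 * q / p" if "t \<ge> T" for t
  proof -
    have "p / q * hh zs (z t) \<le> V0" using PL(4)[OF that] Vle[OF that] by linarith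
    then have "hh zs (z t) \<le> V0 * q / p" using pos by (simp add: field_simps)
    from hh_bound[OF xs(4) zn[OF that] zpos_if[OF _ that] this] show ?thesis .
  qed
  have bx: "bnd T x" unfolding bnd_def using xM xp by (intro exI[of _ Mx]) (auto simp: abs_of_pos)
  have by': "bnd T y" unfolding bnd_def using yM yn by (intro exI) (auto simp: abs_of_nonneg)
  have bv: "bnd T v" unfolding bnd_def using vM vn by (intro exI) (auto simp: abs_of_nonneg)
  have bz: "bnd T z" unfolding bnd_def using zM zn by (intro exI) (auto simp: abs_of_nonneg)
  define T1 where "T1 = T + tau"
  have T1: "T \<le> T1" "0 \<le> T1" using T0 pos by (auto simp: T1_def)
  have bx1: "bnd T1 x" and by1: "bnd T1 y" and bv1: "bnd T1 v" and bz1: "bnd T1 z"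
    using bnd_mono T1 bx by' bv bz by blast+
  have bxs: "bnd T1 (\<lambda>t. x (t - tau))" and bvs: "bnd T1 (\<lambda>t. v (t - tau))"
    unfolding T1_def by (intro bnd_shift bx bv)+
  have dx1: "(x has_real_derivative (s - d * x t - k * x t * v t)) (at t within {T1..})" if "t \<ge> T1" for t
    by (rule dx[OF T1(2)]) (use that in auto)
  have dy1: "(y has_real_derivative (c * x (t - tau) * v (t - tau) - dl * y t - p * y t * z t)) (at t within {T1..})" if "t \<ge> T1" for t
    by (rule dy[OF T1(2)]) (use that in auto)
  have dv1: "(v has_real_derivative (N * dl * y t - mu * v t)) (at t within {T1..})" if "t \<ge> T1" for t
    by (rule dv[OF T1(2)]) (use that in auto)
  have dz1: "(z has_real_derivative (q * y t * z t - b * z t)) (at t within {T1..})" if "t \<ge> T1" for t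
    by (rule dz[OF T1(2)]) (use that in auto)
  have bgx: "bnd T1 (\<lambda>t. s - d * x t - k * x t * v t)"
    by (intro bnd_diff bnd_mult bnd_const bx1 bv1)
  have bgy: "bnd T1 (\<lambda>t. c * x (t - tau) * v (t - tau) - dl * y t - p * y t * z t)"
    by (intro bnd_diff bnd_mult bnd_const bxs bvs by1 bz1)
  have bgv: "bnd T1 (\<lambda>t. N * dl * y t - mu * v t)"
    by (intro bnd_diff bnd_mult bnd_const by1 bv1)
  have bgz: "bnd T1 (\<lambda>t. q * y t * z t - b * z t)"
    by (intro bnd_diff bnd_mult bnd_const by1 bz1)
  have lx: "lip T1 x" by (rule lip_deriv[OF dx1 bgx])
  have ly: "lip T1 y" by (rule lip_deriv[OF dy1 bgy])
  have lv: "lip T1 v" by (rule lip_deriv[OF dv1 bgv])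
  have lz: "lip T1 z" by (rule lip_deriv[OF dz1 bgz])
  have lxs: "lip (T1 + tau) (\<lambda>t. x (t - tau))" and lvs: "lip (T1 + tau) (\<lambda>t. v (t - tau))"
    by (intro lip_shift lx lv)+
  have T2: "T1 \<le> T1 + tau" using pos by simp
  define f where "f = (\<lambda>t. E * d / Mx * ((x t - xs) * (x t - xs)) + \<beta> * z t)"
  have Mxpos: "Mx > 0" using xM[of T] xp[of T] by simp
  have f0: "f t \<ge> 0" if "t \<ge> T1" for t
  proof -
    have "E * d / Mx \<ge> 0" using E pos Mxpos by simp
    moreover have "(x t - xs) * (x t - xs) \<ge> 0" by simp
    moreover have "\<beta> * z t \<ge> 0" using \<beta> zn[of t] that T1 by simp
    ultimately have "E * d / Mx * ((x t - xs) * (x t - xs)) \<ge> 0" "\<beta> * z t \<ge> 0"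
      by (blast intro: mult_nonneg_nonneg)+
    then show ?thesis unfolding f_def by linarith
  qed
  have Df: "DV xs ys vs zs a t \<le> - f t" if "t \<ge> T1" for t
  proof -
    have t: "t \<ge> T" using that T1 by simp
    have "(x t - xs)^2 / Mx \<le> (x t - xs)^2 / x t"
      using xM[OF t] xp[OF t] by (intro divide_left_mono) auto
    then have "E * d * ((x t - xs)^2 / Mx) \<le> E * d * ((x t - xs)^2 / x t)"
      using E pos by (intro mult_left_mono) auto
    then show ?thesis using hD[OF t] unfolding f_def E_def by (simp add: power2_eq_square)
  qed
  have lf: "lip T1 f" unfolding f_def
    by (intro lip_add lip_cmult lip_mult lip_diff lx lz lip_const bnd_diff bx1 bnd_const)
  have dV1: "(Vf xs ys vs zs a has_real_derivative DV xs ys vs zs a t) (at t within {T1..})" if "t \<ge> T1" for t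
    by (rule has_field_derivative_subset[OF PH_dV[OF ph]]) (use that T1 in auto)
  have flim: "(f \<longlongrightarrow> 0) at_top"
    by (rule barbalatB[OF dV1 Df f0, where m = 0]) (use Vnn T1 lf in auto)
  have "((\<lambda>t. (x t - xs)^2) \<longlongrightarrow> 0) at_top"
  proof (rule squeeze0[OF _ _ _, where T = T1])
    show "((\<lambda>t. Mx / (E * d) * f t) \<longlongrightarrow> 0) at_top" using tendsto_mult_right_zero[OF flim, of "Mx / (E * d)"] by simp
    fix t assume t: "t \<ge> T1"
    show "0 \<le> (x t - xs)^2" by simp
    have "E * d / Mx * (x t - xs)^2 \<le> f t" unfolding f_def using \<beta> zn[of t] t T1 by (simp add: power2_eq_square)
    then show "(x t - xs)^2 \<le> Mx / (E * d) * f t" using E pos Mxpos by (simp add: field_simps)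
  qed
  then have "((\<lambda>t. x t - xs) \<longlongrightarrow> 0) at_top" by (rule sq_tendsto0)
  then show xlim: "(x \<longlongrightarrow> xs) at_top" by (rule LIM_zero_cancel)
  show "\<beta> > 0 \<Longrightarrow> (z \<longlongrightarrow> 0) at_top"
  proof -
    assume bp: "\<beta> > 0"
    show ?thesis
    proof (rule squeeze0[OF _ _ _, where T = T1])
      show "((\<lambda>t. f t / \<beta>) \<longlongrightarrow> 0) at_top" using tendsto_divide_zero[OF flim] by simp
      fix t assume t: "t \<ge> T1"
      show "0 \<le> z t" using zn t T1 by simp
      have "\<beta> * z t \<le> f t" unfolding f_def using E pos Mxpos by (simp add: power2_eq_square)
      then show "z t \<le> f t / \<beta>" using bp by (simp add: field_simps)
    qed
  qed
  have gx: "((\<lambda>t. s - d * x t - k * x t * v t) \<longlongrightarrow> 0) at_top"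
  proof (rule barbalatA[OF xlim])
    show "\<And>t. t \<ge> T1 \<Longrightarrow> (x has_real_derivative (s - d * x t - k * x t * v t)) (at t within {T1..})" by (rule dx1)
    show "lip T1 (\<lambda>t. s - d * x t - k * x t * v t)"
      by (intro lip_diff lip_mult lip_const lx lv bnd_const bx1 bv1 bnd_mult)
  qed
  have "((\<lambda>t. (s - d * x t - (s - d * x t - k * x t * v t)) / (k * x t)) \<longlongrightarrow> (s - d * xs - 0) / (k * xs)) at_top"
    using xs pos by (intro tendsto_intros xlim gx) auto
  moreover have "(s - d * xs - 0) / (k * xs) = vs" using r1 xs pos by (simp add: field_simps)
  ultimately have "((\<lambda>t. (s - d * x t - (s - d * x t - k * x t * v t)) / (k * x t)) \<longlongrightarrow> vs) at_top" by simp
  moreover have "\<forall>\<^sub>F t in at_top. (s - d * x t - (s - d * x t - k * x t * v t)) / (k * x t) = v t"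
    using eventually_ge_at_top[of T] by (rule eventually_mono) (use xp pos in force)
  ultimately show vlim: "(v \<longlongrightarrow> vs) at_top" by (rule Lim_transform_eventually)
  have gv: "((\<lambda>t. N * dl * y t - mu * v t) \<longlongrightarrow> 0) at_top"
  proof (rule barbalatA[OF vlim])
    show "\<And>t. t \<ge> T1 \<Longrightarrow> (v has_real_derivative (N * dl * y t - mu * v t)) (at t within {T1..})" by (rule dv1)
    show "lip T1 (\<lambda>t. N * dl * y t - mu * v t)" by (intro lip_diff lip_cmult ly lv)
  qed
  have "((\<lambda>t. ((N * dl * y t - mu * v t) + mu * v t) / (N * dl)) \<longlongrightarrow> (0 + mu * vs) / (N * dl)) at_top"
    using pos by (intro tendsto_intros gv vlim) auto
  moreover have "(0 + mu * vs) / (N * dl) = ys" using r3 pos by (simp add: field_simps)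
  moreover have "\<forall>\<^sub>F t in at_top. ((N * dl * y t - mu * v t) + mu * v t) / (N * dl) = y t"
    using pos by simp
  ultimately show ylim: "(y \<longlongrightarrow> ys) at_top" using Lim_transform_eventually by fastforce
  show "ys > 0 \<Longrightarrow> (z \<longlongrightarrow> zs) at_top"
  proof -
    assume ysp: "ys > 0"
    have gy: "((\<lambda>t. c * x (t - tau) * v (t - tau) - dl * y t - p * y t * z t) \<longlongrightarrow> 0) at_top"
    proof (rule barbalatA[OF ylim])
      show "\<And>t. t \<ge> T1 + tau \<Longrightarrow> (y has_real_derivative (c * x (t - tau) * v (t - tau) - dl * y t - p * y t * z t)) (at t within {T1 + tau..})"
        by (rule dy) (use T1 pos in auto)
      have ly2: "lip (T1 + tau) y" and lz2: "lip (T1 + tau) z" using lip_mono T2 ly lz by blast+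
      have by2: "bnd (T1 + tau) y" and bz2: "bnd (T1 + tau) z" using bnd_mono T2 by1 bz1 by blast+
      have bxs2: "bnd (T1 + tau) (\<lambda>t. x (t - tau))" and bvs2: "bnd (T1 + tau) (\<lambda>t. v (t - tau))"
        using bnd_mono T2 bxs bvs by blast+
      show "lip (T1 + tau) (\<lambda>t. c * x (t - tau) * v (t - tau) - dl * y t - p * y t * z t)"
        by (intro lip_diff lip_mult lip_cmult lxs lvs ly2 lz2 bnd_mult bnd_const bxs2 bvs2 by2 bz2)
    qed
    have "((\<lambda>t. (c * x (t - tau) * v (t - tau) - dl * y t - (c * x (t - tau) * v (t - tau) - dl * y t - p * y t * z t)) / (p * y t))
        \<longlongrightarrow> (c * xs * vs - dl * ys - 0) / (p * ys)) at_top"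
      using ysp pos by (intro tendsto_intros tendsto_shift xlim vlim ylim gy) auto
    moreover have "(c * xs * vs - dl * ys - 0) / (p * ys) = zs" using r2 ysp pos by (simp add: field_simps)
    moreover have "\<forall>\<^sub>F t in at_top. (c * x (t - tau) * v (t - tau) - dl * y t - (c * x (t - tau) * v (t - tau) - dl * y t - p * y t * z t)) / (p * y t) = z t"
      using eventually_ge_at_top[of T] by (rule eventually_mono) (use ypos_if[OF ysp] pos in force)
    ultimately show ?thesis using Lim_transform_eventually by fastforce
  qed
qed

end

lemma hh_small:
  assumes "us \<ge> 0" "u \<ge> 0" "\<bar>u - us\<bar> \<le> \<eta>" "\<eta> \<le> 1" "us > 0 \<Longrightarrow> \<eta> \<le> us / 2"
  shows "hh us u \<le> \<eta> * (1 + 2 / us)"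
proof (cases "us = 0")
  case True
  then show ?thesis using assms by simp
next
  case False
  then have us: "us > 0" using assms by simp
  have e: "\<eta> \<ge> 0" "\<eta> \<le> us / 2" using assms us by auto
  have "us - u \<le> \<eta>" using assms(3) by (simp add: abs_le_iff)
  then have u: "u \<ge> us / 2" using e by linarith
  then have up: "u > 0" using us by simp
  have "hh us u \<le> (u - us)^2 / u" by (rule hh_le_sq[OF us up])
  also have "\<dots> \<le> \<eta>^2 / (us / 2)"
  proof (rule frac_le)
    show "(u - us)^2 \<le> \<eta>^2" using assms(3) by (metis abs_ge_zero power2_abs power_mono)
  qed (use us u e in auto)
  also have "\<dots> = \<eta> * (2 * \<eta> / us)" using us by (simp add: field_simps power2_eq_square)
  also have "\<dots> \<le> \<eta> * (1 + 2 / us)"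
  proof (rule mult_left_mono)
    have "2 * \<eta> / us \<le> 2 / us" using assms(4) us by (simp add: divide_right_mono)
    then show "2 * \<eta> / us \<le> 1 + 2 / us" by simp
  qed (use e in auto)
  finally show ?thesis .
qed

context sol
begin

lemma x_pos_after0: "x 0 > 0 \<Longrightarrow> t \<ge> 0 \<Longrightarrow> x t > 0"
  using x_pos by (cases "t = 0") auto

lemma stab_generic:
  assumes a: "a > 0" and eqs: "xs > 0" "ys \<ge> 0" "vs \<ge> 0" "zs \<ge> 0"
    and \<eta>: "0 < \<eta>" "\<eta> \<le> 1" "\<eta> \<le> xs / 2" "ys > 0 \<Longrightarrow> \<eta> \<le> ys / 2" "vs > 0 \<Longrightarrow> \<eta> \<le> vs / 2" "zs > 0 \<Longrightarrow> \<eta> \<le> zs / 2"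
      "\<eta> * (vs + 1 + xs) \<le> 1" "xs * vs > 0 \<Longrightarrow> \<eta> * (vs + 1 + xs) \<le> xs * vs / 2"
    and init: "\<forall>\<theta>\<in>{-tau..0}. \<bar>x \<theta> - xs\<bar> < \<eta> \<and> \<bar>v \<theta> - vs\<bar> < \<eta>" "\<bar>y 0 - ys\<bar> < \<eta>" "\<bar>z 0 - zs\<bar> < \<eta>"
    and hD: "PH 0 xs ys vs zs \<Longrightarrow> (\<And>t. t \<ge> 0 \<Longrightarrow> DV xs ys vs zs a t \<le> 0)"
    and t: "t \<ge> 0"
  shows "PH 0 xs ys vs zs \<and> max (max (exp (- dl * tau) * hh xs (x t)) (hh ys (y t))) (max (a * hh vs (v t)) (p / q * hh zs (z t)))
     \<le> \<eta> * (exp (- dl * tau) * (1 + 2 / xs) + (1 + 2 / ys) + a * (1 + 2 / vs) + p / q * (1 + 2 / zs)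
            + c * tau * ((vs + 1 + xs) * (1 + 2 / (xs * vs))))"
proof -
  have x0: "\<bar>x 0 - xs\<bar> < \<eta>" "\<bar>v 0 - vs\<bar> < \<eta>" using init(1) pos by auto
  have xi: "x \<theta> > xs / 2" if "\<theta> \<in> {-tau..0}" for \<theta> using init(1) that \<eta> by force
  have vi: "vs > 0 \<Longrightarrow> v \<theta> > vs / 2" if "\<theta> \<in> {-tau..0}" for \<theta> using init(1) that \<eta> by force
  have ph: "PH 0 xs ys vs zs"
    unfolding PH_def
  proof (intro conjI)
    show "\<forall>t\<ge>0. x t > 0" using x_pos_after0 xi[of 0] eqs pos by auto
    show "ys = 0 \<or> (\<forall>t\<ge>0. y t > 0)"
    proof (cases "ys = 0")
      case False
      then have "y 0 > 0" using init(2) \<eta>(4) eqs by force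
      then show ?thesis using y_pos_after[of 0] by auto
    qed simp
    show "vs = 0 \<or> (\<forall>t\<ge>0. v t > 0)"
    proof (cases "vs = 0")
      case False
      then have "v 0 > 0" using vi[of 0] eqs pos by force
      then show ?thesis using v_pos_after[of 0] by auto
    qed simp
    show "zs = 0 \<or> (\<forall>t\<ge>0. z t > 0)"
    proof (cases "zs = 0")
      case False
      then have "z 0 > 0" using init(3) \<eta>(6) eqs by force
      then show ?thesis using z_pos by auto
    qed simp
    show "xs * vs = 0 \<or> (\<forall>t\<ge>0 - tau. x t * v t > 0)"
    proof (cases "xs * vs = 0")
      case False
      then have vsp: "vs > 0" using eqs by (simp add: less_le)
      have "x t * v t > 0" if "t \<ge> - tau" for t
      proof (cases "t \<le> 0")
        case True
        then show ?thesis using xi[of t] vi[of t] vsp eqs that by (simp add: mult_pos_pos)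
      next
        case False
        have "x 0 > 0" "v 0 > 0" using xi[of 0] vi[of 0] vsp eqs pos by auto
        then show ?thesis using x_pos_after0 v_pos_after[of 0 t] False by (simp add: mult_pos_pos)
      qed
      then show ?thesis by simp
    qed simp
  qed (use eqs in auto)
  define K0 where "K0 = exp (- dl * tau) * (1 + 2 / xs) + (1 + 2 / ys) + a * (1 + 2 / vs) + p / q * (1 + 2 / zs)
            + c * tau * ((vs + 1 + xs) * (1 + 2 / (xs * vs)))"
  have b1: "hh xs (x 0) \<le> \<eta> * (1 + 2 / xs)"
    by (rule hh_small) (use eqs xi[of 0] x0 \<eta> pos in auto)
  have b2: "hh ys (y 0) \<le> \<eta> * (1 + 2 / ys)"
    by (rule hh_small) (use eqs adm_y init(2) \<eta> in auto)
  have b3: "hh vs (v 0) \<le> \<eta> * (1 + 2 / vs)"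
    by (rule hh_small) (use eqs adm_v[of 0] x0 \<eta> pos in auto)
  have b4: "hh zs (z 0) \<le> \<eta> * (1 + 2 / zs)"
    by (rule hh_small) (use eqs adm_z init(3) \<eta> in auto)
  have bI: "hh (xs * vs) (x \<theta> * v \<theta>) \<le> \<eta> * ((vs + 1 + xs) * (1 + 2 / (xs * vs)))" if th: "\<theta> \<in> {-tau..0}" for \<theta>
  proof -
    have xv: "\<bar>x \<theta> - xs\<bar> < \<eta>" "\<bar>v \<theta> - vs\<bar> < \<eta>" using init(1) th by auto
    have "x \<theta> * v \<theta> - xs * vs = (x \<theta> - xs) * v \<theta> + xs * (v \<theta> - vs)" by (simp add: algebra_simps)
    then have "\<bar>x \<theta> * v \<theta> - xs * vs\<bar> \<le> \<bar>x \<theta> - xs\<bar> * \<bar>v \<theta>\<bar> + xs * \<bar>v \<theta> - vs\<bar>"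
      using abs_triangle_ineq[of "(x \<theta> - xs) * v \<theta>" "xs * (v \<theta> - vs)"] eqs by (simp add: abs_mult)
    also have "\<dots> \<le> \<eta> * (vs + 1) + xs * \<eta>"
    proof (rule add_mono)
      have "\<bar>v \<theta>\<bar> \<le> vs + 1" using xv(2) \<eta> eqs by linarith
      then show "\<bar>x \<theta> - xs\<bar> * \<bar>v \<theta>\<bar> \<le> \<eta> * (vs + 1)" using xv(1) by (intro mult_mono) auto
      show "xs * \<bar>v \<theta> - vs\<bar> \<le> xs * \<eta>" using xv(2) eqs by (intro mult_left_mono) auto
    qed
    finally have d: "\<bar>x \<theta> * v \<theta> - xs * vs\<bar> \<le> \<eta> * (vs + 1 + xs)" by (simp add: algebra_simps)
    have "hh (xs * vs) (x \<theta> * v \<theta>) \<le> (\<eta> * (vs + 1 + xs)) * (1 + 2 / (xs * vs))"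
    proof (rule hh_small[OF _ _ d \<eta>(7)])
      show "xs * vs \<ge> 0" using eqs by simp
      show "x \<theta> * v \<theta> \<ge> 0" using x_nonneg v_nonneg th by auto
      show "xs * vs > 0 \<Longrightarrow> \<eta> * (vs + 1 + xs) \<le> xs * vs / 2" by (rule \<eta>(8))
    qed
    then show ?thesis by (simp only: mult.assoc)
  qed
  have cFI: "continuous_on {-tau..0} (\<lambda>\<theta>. hh (xs * vs) (x \<theta> * v \<theta>))"
  proof (rule hh_cont)
    show "continuous_on {-tau..0} (\<lambda>\<theta>. x \<theta> * v \<theta>)" by (rule continuous_on_subset[OF cP]) auto
    show "xs * vs = 0 \<or> (\<forall>\<theta>\<in>{-tau..0}. x \<theta> * v \<theta> > 0)" using ph unfolding PH_def by auto
  qed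
  have "integral {-tau..0} (\<lambda>\<theta>. hh (xs * vs) (x \<theta> * v \<theta>)) \<le> integral {-tau..0} (\<lambda>\<theta>. \<eta> * ((vs + 1 + xs) * (1 + 2 / (xs * vs))))"
    by (rule integral_le[OF integrable_continuous_real[OF cFI]]) (use bI in auto)
  also have "\<dots> = tau * (\<eta> * ((vs + 1 + xs) * (1 + 2 / (xs * vs))))" using pos by simp
  finally have bI': "c * integral {0 - tau..0} (\<lambda>\<theta>. hh (xs * vs) (x \<theta> * v \<theta>)) \<le> c * (tau * (\<eta> * ((vs + 1 + xs) * (1 + 2 / (xs * vs)))))"
    using c_pos by (simp add: mult_left_mono)
  have "Vf xs ys vs zs a 0 \<le> \<eta> * K0"
  proof -
    have "Vf xs ys vs zs a 0 \<le> exp (- dl * tau) * (\<eta> * (1 + 2 / xs)) + \<eta> * (1 + 2 / ys) + a * (\<eta> * (1 + 2 / vs))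
       + p / q * (\<eta> * (1 + 2 / zs)) + c * (tau * (\<eta> * ((vs + 1 + xs) * (1 + 2 / (xs * vs)))))"
      unfolding Vf_def
      by (intro add_mono mult_left_mono b1 b2 b3 b4 bI') (use a pos in auto)
    then show ?thesis unfolding K0_def by (simp add: algebra_simps)
  qed
  moreover have "Vf xs ys vs zs a t \<le> Vf xs ys vs zs a 0"
    by (rule Vf_mono[OF ph hD[OF ph] t])
  moreover note PL = pieces_le[OF ph t less_imp_le[OF a]]
  ultimately show ?thesis unfolding K0_def[symmetric] using ph by linarith
qed

end

context sol
begin

lemma DV_case0:
  assumes xs: "xs = s / d" and R: "c * xs \<le> mu / N" and t: "t \<ge> 0" and xt: "x t > 0"
  shows "DV xs 0 0 0 (1 / N) t \<le> - (exp (- dl * tau) * d * (x t - xs)^2 / x t) - p * b / q * z t"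
  unfolding DV_def
proof (rule alg_zero)
  show "s = d * xs" using xs pos by simp
  show "x t > 0" by (rule xt)
  show "y t \<ge> 0" "v t \<ge> 0" "z t \<ge> 0" using y_nonneg v_nonneg z_nonneg t pos by auto
  show "x (t - tau) \<ge> 0" "v (t - tau) \<ge> 0" using x_nonneg v_nonneg t by auto
qed (use pos R in auto)

lemma DV_casepos:
  assumes eq: "xs > 0" "ys > 0" "vs > 0" "zs \<ge> 0"
    and r1: "s = d * xs + k * xs * vs" and r2: "c * xs * vs = dl * ys + p * ys * zs"
    and r3: "N * dl * ys = mu * vs" and ra: "a = c * xs / mu"
    and rz: "(zs = 0 \<and> q * ys \<le> b) \<or> q * ys = b"
    and t: "t \<ge> 0" and vals: "x t > 0" "y t > 0" "v t > 0" "x (t - tau) > 0" "v (t - tau) > 0"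
      "zs > 0 \<Longrightarrow> z t > 0"
  shows "DV xs ys vs zs a t \<le> - (exp (- dl * tau) * d * (x t - xs)^2 / x t) - 0 * z t"
  unfolding DV_def
  using alg_pos[OF pos(1-3) exp_gt_zero pos(4-9) eq r1 r2 r3 ra rz vals(1-5) z_nonneg[OF t] vals(6)]
  by simp

end

lemma eq_case0:
  fixes s d k dl N mu tau :: real
  assumes "s > 0" "d > 0" "k > 0" "dl > 0" "N > 0" "mu > 0"
    and R: "R0bar s d k dl N mu tau \<le> 1"
  shows "k * exp (- dl * tau) * (s / d) \<le> mu / N"
proof -
  have "R0bar s d k dl N mu tau = k * exp (- dl * tau) * (s / d) / (mu / N)"
    unfolding R0bar_def using assms by (simp add: field_simps)
  then have "k * exp (- dl * tau) * (s / d) / (mu / N) \<le> 1" using R by simp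
  moreover have "mu / N > 0" using assms by simp
  ultimately show ?thesis by (simp only: divide_le_eq_1_pos)
qed

lemma eq_case1:
  fixes s d k dl p N mu q b tau :: real
  assumes pos: "s > 0" "d > 0" "k > 0" "dl > 0" "p > 0" "N > 0" "mu > 0" "q > 0" "b > 0"
    and R1: "R1bar s d k dl N mu q b tau \<le> 1" and R0: "1 < R0bar s d k dl N mu tau"
  defines "xs \<equiv> mu * exp (dl * tau) / (k * N)"
    and "ys \<equiv> exp (- dl * tau) / dl * (s - d * mu * exp (dl * tau) / (k * N))"
    and "vs \<equiv> N * exp (- dl * tau) / mu * (s - d * mu * exp (dl * tau) / (k * N))"
  shows "xs > 0" "ys > 0" "vs > 0" "s = d * xs + k * xs * vs"
    "k * exp (- dl * tau) * xs * vs = dl * ys + p * ys * 0" "N * dl * ys = mu * vs"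
    "q * ys \<le> b" "k * exp (- dl * tau) * xs / mu = 1 / N"
proof -
  define E where "E = exp (- dl * tau)"
  have E: "E > 0" "exp (dl * tau) = 1 / E" unfolding E_def by (auto simp: exp_minus inverse_eq_divide)
  have xs': "xs = mu / (E * k * N)" unfolding xs_def E(2) by simp
  have xsp: "xs > 0" unfolding xs' using E pos by simp
  have dx: "d * (mu / (k * exp (- dl * tau) * N)) = d * xs" unfolding xs' E_def[symmetric] by (simp add: ac_simps)
  have R0': "R0bar s d k dl N mu tau = s / (d * xs)" unfolding R0bar_def dx ..
  have "1 < s / (d * xs)" using R0 unfolding R0' .
  then have sd: "s - d * xs > 0" using xsp pos by (simp add: less_divide_eq)
  have dxs: "d * mu * exp (dl * tau) / (k * N) = d * xs" unfolding xs_def by simp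
  have ys': "ys = E / dl * (s - d * xs)" unfolding ys_def dxs E_def ..
  have vs': "vs = N * E / mu * (s - d * xs)" unfolding vs_def dxs E_def ..
  have kxs: "k * E * xs = mu / N" unfolding xs' using E pos by (simp add: field_simps)
  show "xs > 0" by (rule xsp)
  show "ys > 0" unfolding ys' using E pos sd by simp
  show "vs > 0" unfolding vs' using E pos sd by simp
  have "k * xs * vs = (k * E * xs) * N / mu * (s - d * xs)" unfolding vs' by (simp add: ac_simps)
  also have "\<dots> = s - d * xs" unfolding kxs using pos by simp
  finally show "s = d * xs + k * xs * vs" by simp
  have "k * exp (- dl * tau) * xs * vs = (k * E * xs) * vs" unfolding E_def by simp
  also have "\<dots> = E * (s - d * xs)" unfolding kxs vs' using pos by simp
  also have "\<dots> = dl * ys" unfolding ys' using pos by simp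
  finally show "k * exp (- dl * tau) * xs * vs = dl * ys + p * ys * 0" by simp
  show "N * dl * ys = mu * vs" unfolding vs' ys' using pos by simp
  show "k * exp (- dl * tau) * xs / mu = 1 / N" using kxs pos unfolding E_def by simp
  have r1: "R1bar s d k dl N mu q b tau = s / (d * xs + (1 / E) * dl * (b / q))"
    unfolding R1bar_def dx E(2) ..
  have den: "d * xs + (1 / E) * dl * (b / q) > 0" using pos xsp E by (intro add_pos_pos mult_pos_pos divide_pos_pos) auto
  have "s \<le> d * xs + (1 / E) * dl * (b / q)" using R1 den unfolding r1 by (simp add: divide_le_eq)
  then have "s - d * xs \<le> (1 / E) * dl * (b / q)" by linarith
  then have "E * (s - d * xs) \<le> E * ((1 / E) * dl * (b / q))" using E by (simp only: mult_le_cancel_left_pos)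
  then have "E * (s - d * xs) \<le> dl * (b / q)" using E by simp
  then have "E / dl * (s - d * xs) \<le> b / q" using pos by (simp add: field_simps)
  then show "q * ys \<le> b" unfolding ys' using pos by (simp add: field_simps)
qed

lemma eq_case2:
  fixes s d k dl p N mu q b tau :: real
  assumes pos: "s > 0" "d > 0" "k > 0" "dl > 0" "p > 0" "N > 0" "mu > 0" "q > 0" "b > 0"
    and R1: "R1bar s d k dl N mu q b tau > 1"
  defines "xs \<equiv> s / (d + k * N * dl * b / (mu * q))"
  defines "zs \<equiv> dl / p * (k * exp (- dl * tau) * N * xs / mu - 1)"
  shows "xs > 0" "b / q > 0" "N * dl * b / (mu * q) > 0" "zs > 0" "s = d * xs + k * xs * (N * dl * b / (mu * q))"
    "k * exp (- dl * tau) * xs * (N * dl * b / (mu * q)) = dl * (b / q) + p * (b / q) * zs"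
    "N * dl * (b / q) = mu * (N * dl * b / (mu * q))"
proof -
  define E where "E = exp (- dl * tau)"
  have E: "E > 0" "exp (dl * tau) = 1 / E" unfolding E_def by (auto simp: exp_minus inverse_eq_divide)
  have den: "d + k * N * dl * b / (mu * q) > 0" using pos by (intro add_pos_pos mult_pos_pos divide_pos_pos) auto
  show xsp: "xs > 0" unfolding xs_def using pos den by simp
  show "b / q > 0" "N * dl * b / (mu * q) > 0" using pos by auto
  have "d * xs + k * xs * (N * dl * b / (mu * q)) = xs * (d + k * N * dl * b / (mu * q))"
    by (simp add: algebra_simps)
  also have "\<dots> = s" unfolding xs_def using den by simp
  finally show "s = d * xs + k * xs * (N * dl * b / (mu * q))" by simp
  show "N * dl * (b / q) = mu * (N * dl * b / (mu * q))" using pos by (simp add: field_simps)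
  show "k * exp (- dl * tau) * xs * (N * dl * b / (mu * q)) = dl * (b / q) + p * (b / q) * zs"
    unfolding zs_def using pos by (simp add: field_simps)
  have "R1bar s d k dl N mu q b tau = s / ((1 / E) * (d * mu / (k * N) + dl * b / q))"
    unfolding R1bar_def E_def using pos E by (simp add: field_simps exp_minus)
  also have "\<dots> = (s * E * k * N / mu) / (d + k * N * dl * b / (mu * q))"
    using pos E by (simp add: field_simps)
  also have "\<dots> = (E * k * N / mu) * (s / (d + k * N * dl * b / (mu * q)))" by simp
  also have "\<dots> = E * k * N * xs / mu" unfolding xs_def by simp
  finally have "E * k * N * xs / mu > 1" using R1 by simp
  then have "k * exp (- dl * tau) * N * xs / mu - 1 > 0" unfolding E_def by (simp add: mult.commute mult.left_commute)
  then show "zs > 0" unfolding zs_def using pos by simp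
qed

lemma GAS_from:
  fixes s d k dl p N mu q b tau xs ys vs zs a \<beta> :: real
    and P :: "(real \<Rightarrow> real) \<Rightarrow> (real \<Rightarrow> real) \<Rightarrow> (real \<Rightarrow> real) \<Rightarrow> (real \<Rightarrow> real) \<Rightarrow> bool"
  assumes pos: "s > 0" "d > 0" "k > 0" "dl > 0" "p > 0" "N > 0" "mu > 0" "q > 0" "b > 0" "tau > 0"
    and eqs: "xs > 0" "ys \<ge> 0" "vs \<ge> 0" "zs \<ge> 0" "a > 0" "\<beta> \<ge> 0"
    and r1: "s = d * xs + k * xs * vs" and r3: "N * dl * ys = mu * vs"
    and r2: "k * exp (- dl * tau) * xs * vs = dl * ys + p * ys * zs"
    and zcase: "ys > 0 \<or> (\<beta> > 0 \<and> zs = 0)"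
    and Padm: "\<And>x y v z. P x y v z \<Longrightarrow> admissible tau x y v z"
    and hDpos: "\<And>x y v z T t. is_solution s d k dl p N mu q b tau x y v z \<Longrightarrow> admissible tau x y v z \<Longrightarrow>
        sol.PH tau x y v z T xs ys vs zs \<Longrightarrow> t \<ge> T \<Longrightarrow>
        sol.DV s d k dl p N mu q b tau x y v z xs ys vs zs a t \<le> - (exp (- dl * tau) * d * (x t - xs)^2 / x t) - \<beta> * z t"
    and start: "\<And>x y v z. is_solution s d k dl p N mu q b tau x y v z \<Longrightarrow> P x y v z \<Longrightarrow>
        \<exists>T. sol.PH tau x y v z T xs ys vs zs"
  shows "GAS s d k dl p N mu q b tau P xs ys vs zs"
  unfolding GAS_def
proof (rule conjI)
  show "\<forall>\<epsilon>>0. \<exists>\<eta>>0. \<forall>x y v z. is_solution s d k dl p N mu q b tau x y v z \<and> P x y v z \<and>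
        (\<forall>\<theta>\<in>{-tau..0}. \<bar>x \<theta> - xs\<bar> < \<eta> \<and> \<bar>v \<theta> - vs\<bar> < \<eta>) \<and>
        \<bar>y 0 - ys\<bar> < \<eta> \<and> \<bar>z 0 - zs\<bar> < \<eta> \<longrightarrow>
        (\<forall>t\<ge>0. \<bar>x t - xs\<bar> < \<epsilon> \<and> \<bar>y t - ys\<bar> < \<epsilon> \<and> \<bar>v t - vs\<bar> < \<epsilon> \<and> \<bar>z t - zs\<bar> < \<epsilon>)"
  proof (intro allI impI)
  fix \<epsilon> :: real assume \<epsilon>: "\<epsilon> > 0"
  define E where "E = exp (- dl * tau)"
  have E: "E > 0" by (simp add: E_def)
  obtain rx where rx: "rx > 0" "\<forall>u. u \<ge> 0 \<and> (xs > 0 \<longrightarrow> u > 0) \<and> hh xs u \<le> rx \<longrightarrow> \<bar>u - xs\<bar> < \<epsilon>"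
    using hh_close_ex[OF less_imp_le[OF eqs(1)] \<epsilon>] by blast
  obtain ry where ry: "ry > 0" "\<forall>u. u \<ge> 0 \<and> (ys > 0 \<longrightarrow> u > 0) \<and> hh ys u \<le> ry \<longrightarrow> \<bar>u - ys\<bar> < \<epsilon>"
    using hh_close_ex[OF eqs(2) \<epsilon>] by blast
  obtain rv where rv: "rv > 0" "\<forall>u. u \<ge> 0 \<and> (vs > 0 \<longrightarrow> u > 0) \<and> hh vs u \<le> rv \<longrightarrow> \<bar>u - vs\<bar> < \<epsilon>"
    using hh_close_ex[OF eqs(3) \<epsilon>] by blast
  obtain rz where rz: "rz > 0" "\<forall>u. u \<ge> 0 \<and> (zs > 0 \<longrightarrow> u > 0) \<and> hh zs u \<le> rz \<longrightarrow> \<bar>u - zs\<bar> < \<epsilon>"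
    using hh_close_ex[OF eqs(4) \<epsilon>] by blast
  define R where "R = min (min (E * rx) ry) (min (a * rv) (p / q * rz))"
  have R: "R > 0" using E rx ry rv rz eqs pos by (simp add: R_def)
  define K0 where "K0 = E * (1 + 2 / xs) + (1 + 2 / ys) + a * (1 + 2 / vs) + p / q * (1 + 2 / zs)
            + k * exp (- dl * tau) * tau * ((vs + 1 + xs) * (1 + 2 / (xs * vs)))"
  have K0: "K0 \<ge> 0" unfolding K0_def using E eqs pos
    by (intro add_nonneg_nonneg mult_nonneg_nonneg) auto
  define C where "C = vs + 1 + xs"
  have C: "C > 0" using eqs by (simp add: C_def)
  define ey where "ey = (if ys > 0 then ys / 2 else 1)"
  define ev where "ev = (if vs > 0 then vs / 2 else 1)"
  define ez where "ez = (if zs > 0 then zs / 2 else 1)"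
  define ep where "ep = (if xs * vs > 0 then xs * vs / (2 * C) else 1)"
  define eK where "eK = R / (K0 + 1)"
  have epos: "ey > 0" "ev > 0" "ez > 0" "ep > 0" "eK > 0" "1 / C > 0" "xs / 2 > 0"
    unfolding ey_def ev_def ez_def ep_def eK_def using C R K0 eqs by auto
  have eeq: "ys > 0 \<Longrightarrow> ey = ys / 2" "vs > 0 \<Longrightarrow> ev = vs / 2" "zs > 0 \<Longrightarrow> ez = zs / 2"
    "xs * vs > 0 \<Longrightarrow> ep = xs * vs / (2 * C)"
    unfolding ey_def ev_def ez_def ep_def by auto
  define \<eta> where "\<eta> = min (min (min 1 (xs / 2)) (min ey ev)) (min (min ez (1 / C)) (min ep eK))"
  have \<eta>pos: "\<eta> > 0" unfolding \<eta>_def using epos by simp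
  have \<eta>le0: "\<eta> \<le> 1" "\<eta> \<le> xs / 2" "\<eta> \<le> ey" "\<eta> \<le> ev" "\<eta> \<le> ez"
    "\<eta> \<le> 1 / C" "\<eta> \<le> ep" "\<eta> \<le> eK"
    unfolding \<eta>_def by linarith+
  have \<eta>le: "\<eta> \<le> 1" "\<eta> \<le> xs / 2" "ys > 0 \<Longrightarrow> \<eta> \<le> ys / 2" "vs > 0 \<Longrightarrow> \<eta> \<le> vs / 2" "zs > 0 \<Longrightarrow> \<eta> \<le> zs / 2"
    "\<eta> \<le> 1 / C" "xs * vs > 0 \<Longrightarrow> \<eta> \<le> xs * vs / (2 * C)" "\<eta> \<le> R / (K0 + 1)"
    using \<eta>le0 eeq unfolding eK_def by auto
  have \<eta>C: "\<eta> * (vs + 1 + xs) \<le> 1" using \<eta>le(6) C unfolding C_def[symmetric] by (simp add: field_simps)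
  have \<eta>C2: "xs * vs > 0 \<Longrightarrow> \<eta> * (vs + 1 + xs) \<le> xs * vs / 2" using \<eta>le(7) C unfolding C_def[symmetric]
    by (simp add: field_simps)
  have \<eta>K: "\<eta> * K0 \<le> R"
  proof -
    have "\<eta> * K0 \<le> R / (K0 + 1) * K0" using \<eta>le(8) K0 by (intro mult_right_mono) auto
    also have "\<dots> \<le> R" using R K0 by (simp add: field_simps)
    finally show ?thesis .
  qed
  show "\<exists>\<eta>>0. \<forall>x y v z. is_solution s d k dl p N mu q b tau x y v z \<and> P x y v z \<and>
        (\<forall>\<theta>\<in>{-tau..0}. \<bar>x \<theta> - xs\<bar> < \<eta> \<and> \<bar>v \<theta> - vs\<bar> < \<eta>) \<and>
        \<bar>y 0 - ys\<bar> < \<eta> \<and> \<bar>z 0 - zs\<bar> < \<eta> \<longrightarrow>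
        (\<forall>t\<ge>0. \<bar>x t - xs\<bar> < \<epsilon> \<and> \<bar>y t - ys\<bar> < \<epsilon> \<and> \<bar>v t - vs\<bar> < \<epsilon> \<and> \<bar>z t - zs\<bar> < \<epsilon>)"
  proof (intro exI[of _ \<eta>] conjI allI impI \<eta>pos)
    fix x y v z :: "real \<Rightarrow> real" and t :: real
    assume h: "is_solution s d k dl p N mu q b tau x y v z \<and> P x y v z \<and>
        (\<forall>\<theta>\<in>{-tau..0}. \<bar>x \<theta> - xs\<bar> < \<eta> \<and> \<bar>v \<theta> - vs\<bar> < \<eta>) \<and> \<bar>y 0 - ys\<bar> < \<eta> \<and> \<bar>z 0 - zs\<bar> < \<eta>"
      and t: "0 \<le> t"
    interpret S: sol s d k dl p N mu q b tau x y v z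
      using pos h Padm by unfold_locales auto
    have hD0: "S.DV xs ys vs zs a u \<le> 0" if ph0: "S.PH 0 xs ys vs zs" and u: "u \<ge> 0" for u
    proof -
      have "S.DV xs ys vs zs a u \<le> - (exp (- dl * tau) * d * (x u - xs)^2 / x u) - \<beta> * z u"
        by (rule hDpos[OF conjunct1[OF h] Padm[OF conjunct1[OF conjunct2[OF h]]] ph0 u])
      moreover have "x u > 0" using ph0 u unfolding S.PH_def by auto
      moreover have "z u \<ge> 0" using S.z_nonneg u by simp
      moreover have "exp (- dl * tau) * d * (x u - xs)^2 / x u \<ge> 0"
        using \<open>x u > 0\<close> pos by simp
      moreover have "\<beta> * z u \<ge> 0" using \<open>z u \<ge> 0\<close> eqs(6) by simp
      ultimately show ?thesis by linarith
    qed
    have st: "S.PH 0 xs ys vs zs \<and> max (max (E * hh xs (x t)) (hh ys (y t))) (max (a * hh vs (v t)) (p / q * hh zs (z t))) \<le> \<eta> * K0"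
      unfolding E_def K0_def
      by (rule S.stab_generic[OF eqs(5) eqs(1-4) \<eta>pos \<eta>le(1-5) \<eta>C \<eta>C2 _ _ _ hD0 t]) (use h in auto)
    then have ph0: "S.PH 0 xs ys vs zs" and bnds: "E * hh xs (x t) \<le> R" "hh ys (y t) \<le> R" "a * hh vs (v t) \<le> R" "p / q * hh zs (z t) \<le> R"
      using \<eta>K by auto
    have xt: "x t > 0" using ph0 t unfolding S.PH_def by auto
    show "\<bar>x t - xs\<bar> < \<epsilon>"
    proof -
      have "E * hh xs (x t) \<le> E * rx" using bnds(1) unfolding R_def by linarith
      then have "hh xs (x t) \<le> rx" using E by simp
      then show ?thesis using rx(2)[rule_format, of "x t"] xt by auto
    qed
    show "\<bar>y t - ys\<bar> < \<epsilon>"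
    proof -
      have "hh ys (y t) \<le> ry" using bnds(2) unfolding R_def by linarith
      moreover have "ys > 0 \<longrightarrow> y t > 0" using ph0 t unfolding S.PH_def by auto
      ultimately show ?thesis using ry(2)[rule_format, of "y t"] S.y_nonneg[OF t] by auto
    qed
    show "\<bar>v t - vs\<bar> < \<epsilon>"
    proof -
      have "a * hh vs (v t) \<le> a * rv" using bnds(3) unfolding R_def by linarith
      then have "hh vs (v t) \<le> rv" using eqs(5) by simp
      moreover have "vs > 0 \<longrightarrow> v t > 0" using ph0 t unfolding S.PH_def by auto
      ultimately show ?thesis using rv(2)[rule_format, of "v t"] S.v_nonneg[of t] t pos by auto
    qed
    show "\<bar>z t - zs\<bar> < \<epsilon>"
    proof -
      have "p / q * hh zs (z t) \<le> p / q * rz" using bnds(4) unfolding R_def by linarith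
      moreover have "p / q > 0" using pos by simp
      ultimately have "hh zs (z t) \<le> rz" by (simp only: mult_le_cancel_left_pos)
      moreover have "zs > 0 \<longrightarrow> z t > 0" using ph0 t unfolding S.PH_def by auto
      ultimately show ?thesis using rz(2)[rule_format, of "z t"] S.z_nonneg[OF t] by auto
    qed
  qed
  qed
next
  show "\<forall>x y v z. is_solution s d k dl p N mu q b tau x y v z \<and> P x y v z \<longrightarrow>
        (x \<longlongrightarrow> xs) at_top \<and> (y \<longlongrightarrow> ys) at_top \<and> (v \<longlongrightarrow> vs) at_top \<and> (z \<longlongrightarrow> zs) at_top"
  proof (intro allI impI)
  fix x y v z
  assume h: "is_solution s d k dl p N mu q b tau x y v z \<and> P x y v z"
  interpret S: sol s d k dl p N mu q b tau x y v z
    using pos h Padm by unfold_locales auto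
  obtain T where ph: "S.PH T xs ys vs zs" using start[OF conjunct1[OF h] conjunct2[OF h]] by blast
  have hD: "\<And>t. t \<ge> T \<Longrightarrow> S.DV xs ys vs zs a t \<le> - (exp (- dl * tau) * d * (x t - xs)^2 / x t) - \<beta> * z t"
    using hDpos[OF conjunct1[OF h] Padm[OF conjunct2[OF h]] ph] by blast
  note A = S.attract_generic[OF ph eqs(5) r1 r3 r2 hD eqs(6)]
  have "(z \<longlongrightarrow> zs) at_top" using A zcase by auto
  then show "(x \<longlongrightarrow> xs) at_top \<and> (y \<longlongrightarrow> ys) at_top \<and> (v \<longlongrightarrow> vs) at_top \<and> (z \<longlongrightarrow> zs) at_top" using A by blast
  qed
qed

lemma prod_pos_each: "(a::real) \<ge> 0 \<Longrightarrow> b \<ge> 0 \<Longrightarrow> a * b > 0 \<Longrightarrow> a > 0 \<and> b > 0"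
  by (metis less_eq_real_def mult_zero_left mult_zero_right)

lemma gas_case0:
  fixes s d k dl p N mu q b tau :: real
  assumes pos: "s > 0" "d > 0" "k > 0" "dl > 0" "p > 0" "N > 0" "mu > 0" "q > 0" "b > 0" "tau > 0"
    and R0: "R0bar s d k dl N mu tau \<le> 1"
  shows "GAS s d k dl p N mu q b tau (\<lambda>x y v z. admissible tau x y v z) (s / d) 0 0 0"
proof (rule GAS_from[where a = "1 / N" and \<beta> = "p * b / q"])
  show "s = d * (s / d) + k * (s / d) * 0" using pos by simp
  have R: "k * exp (- dl * tau) * (s / d) \<le> mu / N" by (rule eq_case0) (use pos R0 in auto)
  fix x y v z T t
  assume h: "is_solution s d k dl p N mu q b tau x y v z" "admissible tau x y v z"
    and ph: "sol.PH tau x y v z T (s / d) 0 0 0" and t: "t \<ge> T"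
  interpret S: sol s d k dl p N mu q b tau x y v z using pos h by unfold_locales auto
  have T0: "T \<ge> 0" and xt: "x t > 0" using ph t unfolding S.PH_def by auto
  show "S.DV (s / d) 0 0 0 (1 / N) t \<le> - (exp (- dl * tau) * d * (x t - s / d)^2 / x t) - p * b / q * z t"
    by (rule S.DV_case0[OF refl R]) (use T0 t xt in auto)
next
  fix x y v z
  assume h: "is_solution s d k dl p N mu q b tau x y v z" "admissible tau x y v z"
  interpret S: sol s d k dl p N mu q b tau x y v z using pos h by unfold_locales auto
  have "S.PH (tau + 1) (s / d) 0 0 0" unfolding S.PH_def using pos S.x_pos by auto
  then show "\<exists>T. sol.PH tau x y v z T (s / d) 0 0 0" by blast
qed (use pos in auto)

lemma gas_case1:
  fixes s d k dl p N mu q b tau :: real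
  assumes pos: "s > 0" "d > 0" "k > 0" "dl > 0" "p > 0" "N > 0" "mu > 0" "q > 0" "b > 0" "tau > 0"
    and R1: "R1bar s d k dl N mu q b tau \<le> 1" and R0: "1 < R0bar s d k dl N mu tau"
  shows "GAS s d k dl p N mu q b tau
          (\<lambda>x y v z. admissible tau x y v z \<and>
             (y 0 + x (- tau) * v (- tau) > 0 \<or> v 0 > 0))
          (mu * exp (dl * tau) / (k * N))
          (exp (- dl * tau) / dl * (s - d * mu * exp (dl * tau) / (k * N)))
          (N * exp (- dl * tau) / mu * (s - d * mu * exp (dl * tau) / (k * N)))
          0"
proof -
  define xs where "xs = mu * exp (dl * tau) / (k * N)"
  define ys where "ys = exp (- dl * tau) / dl * (s - d * mu * exp (dl * tau) / (k * N))"
  define vs where "vs = N * exp (- dl * tau) / mu * (s - d * mu * exp (dl * tau) / (k * N))"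
  note EQ = eq_case1[OF pos(1-9) R1 R0, folded xs_def ys_def vs_def]
  have "GAS s d k dl p N mu q b tau
          (\<lambda>x y v z. admissible tau x y v z \<and> (y 0 + x (- tau) * v (- tau) > 0 \<or> v 0 > 0)) xs ys vs 0"
  proof (rule GAS_from[where a = "1 / N" and \<beta> = 0])
    show "xs > 0" "ys \<ge> 0" "vs \<ge> 0" using EQ by auto
    show "s = d * xs + k * xs * vs" "N * dl * ys = mu * vs" "k * exp (- dl * tau) * xs * vs = dl * ys + p * ys * 0"
      using EQ by auto
    show "0 < ys \<or> 0 < (0::real) \<and> 0 = (0::real)" using EQ by auto
    fix x y v z T t
    assume h: "is_solution s d k dl p N mu q b tau x y v z" "admissible tau x y v z"
      and ph: "sol.PH tau x y v z T xs ys vs 0" and t: "t \<ge> T"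
    interpret S: sol s d k dl p N mu q b tau x y v z using pos h by unfold_locales auto
    have T0: "T \<ge> 0" and xt: "x t > 0" and yt: "y t > 0" and vt: "v t > 0"
      and pr: "x (t - tau) * v (t - tau) > 0"
      using ph t EQ unfolding S.PH_def by auto
    have "x (t - tau) \<ge> 0" "v (t - tau) \<ge> 0" using S.x_nonneg S.v_nonneg T0 t by auto
    then have xv: "x (t - tau) > 0" "v (t - tau) > 0" using prod_pos_each pr by blast+
    show "S.DV xs ys vs 0 (1 / N) t \<le> - (exp (- dl * tau) * d * (x t - xs)^2 / x t) - 0 * z t"
    proof (rule S.DV_casepos)
      show "1 / N = k * exp (- dl * tau) * xs / mu" using EQ by simp
    qed (use EQ pos T0 t xt yt vt xv in auto)
  next
    fix x y v z
    assume h: "is_solution s d k dl p N mu q b tau x y v z"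
      "admissible tau x y v z \<and> (y 0 + x (- tau) * v (- tau) > 0 \<or> v 0 > 0)"
    interpret S: sol s d k dl p N mu q b tau x y v z using pos h by unfold_locales auto
    obtain T where T: "T \<ge> tau" "\<forall>t\<ge>T - tau. x t > 0 \<and> v t > 0" "\<forall>t\<ge>T. y t > 0"
      using S.start h(2) by blast
    have "S.PH T xs ys vs 0" unfolding S.PH_def
      using T EQ pos by (auto intro!: mult_pos_pos)
    then show "\<exists>T. sol.PH tau x y v z T xs ys vs 0" by blast
  qed (use pos EQ in auto)
  then show ?thesis unfolding xs_def ys_def vs_def .
qed

lemma gas_case2:
  fixes s d k dl p N mu q b tau :: real
  assumes pos: "s > 0" "d > 0" "k > 0" "dl > 0" "p > 0" "N > 0" "mu > 0" "q > 0" "b > 0" "tau > 0"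
    and R1: "R1bar s d k dl N mu q b tau > 1"
  defines "x2 \<equiv> s / (d + k * N * dl * b / (mu * q))"
  shows "GAS s d k dl p N mu q b tau
          (\<lambda>x y v z. admissible tau x y v z \<and> z 0 > 0 \<and>
             (y 0 + x (- tau) * v (- tau) > 0 \<or> v 0 > 0))
          x2 (b / q) (N * dl * b / (mu * q))
          (dl / p * (k * exp (- dl * tau) * N * x2 / mu - 1))"
proof -
  define zs where "zs = dl / p * (k * exp (- dl * tau) * N * x2 / mu - 1)"
  define ys where "ys = b / q"
  define vs where "vs = N * dl * b / (mu * q)"
  note EQ = eq_case2[OF pos(1-9) R1, folded x2_def, folded zs_def ys_def vs_def]
  have "GAS s d k dl p N mu q b tau
          (\<lambda>x y v z. admissible tau x y v z \<and> z 0 > 0 \<and> (y 0 + x (- tau) * v (- tau) > 0 \<or> v 0 > 0)) x2 ys vs zs"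
  proof (rule GAS_from[where a = "k * exp (- dl * tau) * x2 / mu" and \<beta> = 0])
    show "x2 > 0" "ys \<ge> 0" "vs \<ge> 0" "zs \<ge> 0" using EQ by auto
    show "s = d * x2 + k * x2 * vs" "N * dl * ys = mu * vs" "k * exp (- dl * tau) * x2 * vs = dl * ys + p * ys * zs"
      using EQ by auto
    show "0 < ys \<or> 0 < (0::real) \<and> zs = 0" using EQ by auto
    show "k * exp (- dl * tau) * x2 / mu > 0" using EQ pos by simp
    fix x y v z T t
    assume h: "is_solution s d k dl p N mu q b tau x y v z" "admissible tau x y v z"
      and ph: "sol.PH tau x y v z T x2 ys vs zs" and t: "t \<ge> T"
    interpret S: sol s d k dl p N mu q b tau x y v z using pos h by unfold_locales auto
    have T0: "T \<ge> 0" and xt: "x t > 0" and yt: "y t > 0" and vt: "v t > 0" and zt: "z t > 0"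
      and pr: "x (t - tau) * v (t - tau) > 0"
      using ph t EQ unfolding S.PH_def by auto
    have "x (t - tau) \<ge> 0" "v (t - tau) \<ge> 0" using S.x_nonneg S.v_nonneg T0 t by auto
    then have xv: "x (t - tau) > 0" "v (t - tau) > 0" using prod_pos_each pr by blast+
    show "S.DV x2 ys vs zs (k * exp (- dl * tau) * x2 / mu) t \<le> - (exp (- dl * tau) * d * (x t - x2)^2 / x t) - 0 * z t"
    proof (rule S.DV_casepos)
      show "(zs = 0 \<and> q * ys \<le> b) \<or> q * ys = b" using pos by (simp add: ys_def)
    qed (use EQ pos T0 t xt yt vt zt xv in auto)
  next
    fix x y v z
    assume h: "is_solution s d k dl p N mu q b tau x y v z"
      "admissible tau x y v z \<and> z 0 > 0 \<and> (y 0 + x (- tau) * v (- tau) > 0 \<or> v 0 > 0)"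
    interpret S: sol s d k dl p N mu q b tau x y v z using pos h by unfold_locales auto
    obtain T where T: "T \<ge> tau" "\<forall>t\<ge>T - tau. x t > 0 \<and> v t > 0" "\<forall>t\<ge>T. y t > 0"
      using S.start h(2) by blast
    have "\<forall>t\<ge>T. z t > 0" using S.z_pos h(2) T(1) pos by auto
    then have "S.PH T x2 ys vs zs" unfolding S.PH_def
      using T EQ pos by (auto intro!: mult_pos_pos)
    then show "\<exists>T. sol.PH tau x y v z T x2 ys vs zs" by blast
  qed (use pos EQ in auto)
  then show ?thesis unfolding zs_def ys_def vs_def .
qed

theorem theorem4p1:
  fixes s d k dl p N mu q b tau :: real
  assumes "s > 0" "d > 0" "k > 0" "dl > 0" "p > 0" "N > 0" "mu > 0" "q > 0" "b > 0"
    and "tau > 0"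
  defines "x2 \<equiv> s / (d + k * N * dl * b / (mu * q))"
  shows
    "(R0bar s d k dl N mu tau \<le> 1 \<longrightarrow>
        GAS s d k dl p N mu q b tau (\<lambda>x y v z. admissible tau x y v z)
          (s / d) 0 0 0)
     \<and>
     (R1bar s d k dl N mu q b tau \<le> 1 \<and> 1 < R0bar s d k dl N mu tau \<longrightarrow>
        GAS s d k dl p N mu q b tau
          (\<lambda>x y v z. admissible tau x y v z \<and>
             (y 0 + x (- tau) * v (- tau) > 0 \<or> v 0 > 0))
          (mu * exp (dl * tau) / (k * N))
          (exp (- dl * tau) / dl * (s - d * mu * exp (dl * tau) / (k * N)))
          (N * exp (- dl * tau) / mu * (s - d * mu * exp (dl * tau) / (k * N)))
          0)
     \<and>
     (R1bar s d k dl N mu q b tau > 1 \<longrightarrow>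
        GAS s d k dl p N mu q b tau
          (\<lambda>x y v z. admissible tau x y v z \<and> z 0 > 0 \<and>
             (y 0 + x (- tau) * v (- tau) > 0 \<or> v 0 > 0))
          x2 (b / q) (N * dl * b / (mu * q))
          (dl / p * (k * exp (- dl * tau) * N * x2 / mu - 1)))"
  using gas_case0[OF assms(1-10)] gas_case1[OF assms(1-10)] gas_case2[OF assms(1-10)]
  unfolding x2_def by blast


end
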